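(* (a) Let $v_1,\dots,v_n$ be i.i.d. $\mathcal N(0,I_d/d)$ in $\mathbb R^d$ with $n\ge c\,d^2/\log d$ for a fixed constant $c>0$. For any fixed $\epsilon>0$, with probability $1-e^{-\Omega(d)}$, $$\inf_{x\in S^{d-1}}\frac1n\sum_{i=1}^n|x^\top v_i|\ \ge\ \sqrt{\frac{2-\epsilon}{\pi d}}.$$ (b) If instead $v_1,\dots,v_n\in\mathbb R^d\setminus\{0\}$ are deterministic and satisfy $\|v_i\|\lesssim1$, $\frac1n\sum_iv_iv_i^\top\succeq\frac{c'}{d}I_d$ and $\sup_{\|x\|=1}\frac1n\sum_i\langle v_i,x\rangle^4\lesssim d^{-2}$ (fixed implicit constants), then deterministically $\inf_{x\in S^{d-1}}\frac1n\sum_i|x^\top v_i|\ge C/\sqrt d$ for a constant $C>0$ depending only on these implicit constants.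
   Context: $S^{d-1}$ is the unit sphere in $\mathbb R^d$. Part (a) holds for all sufficiently large $d$. *)

theory Defs
  imports "HOL-Probability.Probability"
begin

text \<open>Vectors in R^d are represented as functions nat => real, only the
coordinates j < d being relevant; a family v_1..v_n is v :: nat => nat => real
(v i j = j-th coordinate of the i-th vector, i < n, j < d).\<close>

definition sphere_d :: "nat \<Rightarrow> (nat \<Rightarrow> real) set" where
  "sphere_d d = {x. (\<Sum>j<d. (x j)\<^sup>2) = 1}"

definition inner_d :: "nat \<Rightarrow> (nat \<Rightarrow> real) \<Rightarrow> (nat \<Rightarrow> real) \<Rightarrow> real" where
  "inner_d d x y = (\<Sum>j<d. x j * y j)"

definition norm_d :: "nat \<Rightarrow> (nat \<Rightarrow> real) \<Rightarrow> real" where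
  "norm_d d x = sqrt (\<Sum>j<d. (x j)\<^sup>2)"

definition avg_abs_proj :: "nat \<Rightarrow> nat \<Rightarrow> (nat \<Rightarrow> nat \<Rightarrow> real) \<Rightarrow> (nat \<Rightarrow> real) \<Rightarrow> real" where
  "avg_abs_proj n d v x = (1 / real n) * (\<Sum>i<n. \<bar>inner_d d x (v i)\<bar>)"

definition loewner_ge :: "nat \<Rightarrow> (nat \<Rightarrow> nat \<Rightarrow> real) \<Rightarrow> (nat \<Rightarrow> nat \<Rightarrow> real) \<Rightarrow> bool" where
  "loewner_ge d M N \<longleftrightarrow> (\<forall>x. (\<Sum>i<d. \<Sum>j<d. x i * (M i j - N i j) * x j) \<ge> 0)"

text \<open>Joint law of n i.i.d. N(0, I_d/d) vectors in R^d: the (i,j) entry is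
the j-th coordinate of v_i, all entries i.i.d. N(0, 1/d) (standard deviation 1/sqrt d).\<close>
definition gauss_vectors :: "nat \<Rightarrow> nat \<Rightarrow> (nat \<times> nat \<Rightarrow> real) measure" where
  "gauss_vectors n d = PiM ({..<n} \<times> {..<d})
      (\<lambda>_. density lborel (normal_density 0 (1 / sqrt (real d))))"

end

theory Submission
  imports Defs
begin

lemma gv_prob_space: "d \<ge> 1 \<Longrightarrow> prob_space (gauss_vectors n d)"
  unfolding gauss_vectors_def
  by (intro prob_space_PiM prob_space_normal_density) simp

lemma sets_N: "sets (density lborel (normal_density 0 s)) = sets borel"
  by simp

lemma gv_component:
  assumes d: "d \<ge> 1" and k: "k \<in> {..<n} \<times> {..<d}"
  shows "distributed (gauss_vectors n d) lborel (\<lambda>\<omega>. \<omega> k) (normal_density 0 (1 / sqrt (real d)))"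
proof -
  let ?N = "density lborel (normal_density 0 (1 / sqrt (real d)))"
  have pN: "prob_space ?N" using d by (intro prob_space_normal_density) simp
  have meas: "(\<lambda>\<omega>. \<omega> k) \<in> measurable (gauss_vectors n d) ?N"
    unfolding gauss_vectors_def using k by (rule measurable_component_singleton)
  have "distr (gauss_vectors n d) lborel (\<lambda>\<omega>. \<omega> k) = distr (gauss_vectors n d) ?N (\<lambda>\<omega>. \<omega> k)"
    by (rule distr_cong) auto
  also have "\<dots> = ?N" unfolding gauss_vectors_def
    by (rule distr_PiM_component[OF pN k])
  finally have eq: "distr (gauss_vectors n d) lborel (\<lambda>\<omega>. \<omega> k) = ?N" .
  have meas': "(\<lambda>\<omega>. \<omega> k) \<in> measurable (gauss_vectors n d) lborel"
    using meas measurable_cong_sets[of "gauss_vectors n d" "gauss_vectors n d" ?N lborel] by simp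
  show ?thesis unfolding distributed_def using meas' eq by simp
qed

lemma gv_indep:
  assumes d: "d \<ge> 1" and n: "n \<ge> 1"
  shows "prob_space.indep_vars (gauss_vectors n d) (\<lambda>_. borel) (\<lambda>k \<omega>. \<omega> k) ({..<n} \<times> {..<d})"
proof -
  let ?M = "gauss_vectors n d"
  let ?I = "{..<n} \<times> {..<d}"
  let ?N = "density lborel (normal_density 0 (1 / sqrt (real d)))"
  interpret prob_space ?M by (rule gv_prob_space[OF d])
  have "(0,0) \<in> ?I" using d n by auto
  then have Ine: "?I \<noteq> {}" by blast
  have rv: "random_variable borel (\<lambda>\<omega>. \<omega> k)" if "k \<in> ?I" for k
    using gv_component[OF d that] by (auto simp: distributed_def)
  have pN: "prob_space ?N" using d by (intro prob_space_normal_density) simp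
  have eq: "distr ?M (Pi\<^sub>M ?I (\<lambda>i. borel)) (\<lambda>x. \<lambda>i\<in>?I. x i) = Pi\<^sub>M ?I (\<lambda>i. distr ?M borel (\<lambda>\<omega>. \<omega> i))"
    proof -
      have "distr ?M (Pi\<^sub>M ?I (\<lambda>i. borel)) (\<lambda>x. \<lambda>i\<in>?I. x i) = distr ?M ?M (\<lambda>x. x)"
      proof (rule distr_cong)
        show "sets (Pi\<^sub>M ?I (\<lambda>i. borel)) = sets ?M" unfolding gauss_vectors_def by (intro sets_PiM_cong) auto
        fix x assume "x \<in> space ?M"
        then have "x \<in> extensional ?I" unfolding gauss_vectors_def space_PiM PiE_def by blast
        then show "(\<lambda>i\<in>?I. x i) = x" by (rule extensional_restrict)
      qed simp
      also have "\<dots> = ?M" by (rule distr_id2) simp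
      also have "\<dots> = Pi\<^sub>M ?I (\<lambda>i. distr ?M borel (\<lambda>\<omega>. \<omega> i))"
        unfolding gauss_vectors_def
      proof (rule PiM_cong)
        fix i assume i: "i \<in> ?I"
        have "distr (Pi\<^sub>M ?I (\<lambda>_. ?N)) borel (\<lambda>\<omega>. \<omega> i) = distr (Pi\<^sub>M ?I (\<lambda>_. ?N)) ?N (\<lambda>\<omega>. \<omega> i)"
          by (rule distr_cong) auto
        also have "\<dots> = ?N" by (rule distr_PiM_component[OF pN i])
        finally show "?N = distr (Pi\<^sub>M ?I (\<lambda>_. ?N)) borel (\<lambda>\<omega>. \<omega> i)" by simp
      qed simp
      finally show ?thesis .
    qed
  show ?thesis by (rule iffD2[OF indep_vars_iff_distr_eq_PiM'[OF Ine rv] eq])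
qed

lemma sum_singleton_times: "(\<Sum>k\<in>{i}\<times>A. f k) = (\<Sum>j\<in>A. f (i, j))"
proof -
  have "{i}\<times>A = (\<lambda>j. (i, j)) ` A" by auto
  then show ?thesis by (simp add: sum.reindex inj_on_def)
qed

lemma row_distr:
  assumes d: "d \<ge> 1" and i: "i < n" and y: "L2_set y {..<d} > 0"
  shows "distributed (gauss_vectors n d) lborel (\<lambda>\<omega>. \<Sum>j<d. y j * \<omega> (i, j))
           (normal_density 0 (1 / sqrt (real d) * L2_set y {..<d}))"
proof -
  let ?M = "gauss_vectors n d"
  let ?\<sigma> = "1 / sqrt (real d)"
  interpret prob_space ?M by (rule gv_prob_space[OF d])
  define J' where "J' = {j. j < d \<and> y j \<noteq> 0}"
  have finJ: "finite J'" unfolding J'_def by auto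
  have J'ne: "J' \<noteq> {}"
  proof
    assume "J' = {}"
    then have "\<forall>j\<in>{..<d}. y j = 0" unfolding J'_def by auto
    then have "L2_set y {..<d} = 0" by (rule L2_set_0')
    with y show False by simp
  qed
  have n1: "n \<ge> 1" using i by simp
  define I' where "I' = {i} \<times> J'"
  have I'sub: "I' \<subseteq> {..<n} \<times> {..<d}" using i unfolding I'_def J'_def by auto
  define X where "X k \<omega> = y (snd k) * \<omega> k" for k :: "nat \<times> nat" and \<omega> :: "nat \<times> nat \<Rightarrow> real"
  have ind: "indep_vars (\<lambda>_. borel) X I'"
  proof -
    have "indep_vars (\<lambda>_. borel) (\<lambda>k \<omega>. \<omega> k) I'"
      by (rule indep_vars_subset[OF gv_indep[OF d n1] I'sub])
    then have "indep_vars (\<lambda>_. borel) (\<lambda>k \<omega>. (\<lambda>t. y (snd k) * t) (\<omega> k)) I'"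
      by (rule indep_vars_compose2) simp
    then show ?thesis unfolding X_def by simp
  qed
  have dist: "distributed ?M lborel (X k) (normal_density 0 (\<bar>y (snd k)\<bar> * ?\<sigma>))" if k: "k \<in> I'" for k
  proof -
    have yk: "y (snd k) \<noteq> 0" using k unfolding I'_def J'_def by auto
    have "distributed ?M lborel (\<lambda>\<omega>. 0 + y (snd k) * \<omega> k) (normal_density (0 + y (snd k) * 0) (\<bar>y (snd k)\<bar> * ?\<sigma>))"
      by (rule normal_density_affine[OF gv_component[OF d] _ yk]) (use k I'sub d in auto)
    then show ?thesis unfolding X_def by simp
  qed
  have pos: "0 < \<bar>y (snd k)\<bar> * ?\<sigma>" if "k \<in> I'" for k
    using that d unfolding I'_def J'_def by auto
  have I'fin: "finite I'" and I'ne: "I' \<noteq> {}" using finJ J'ne unfolding I'_def by auto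
  have S: "distributed ?M lborel (\<lambda>x. \<Sum>k\<in>I'. X k x)
       (normal_density (\<Sum>k\<in>I'. 0) (sqrt (\<Sum>k\<in>I'. (\<bar>y (snd k)\<bar> * ?\<sigma>)\<^sup>2)))"
    by (rule sum_indep_normal[OF I'fin I'ne ind pos dist])
  have e1: "(\<lambda>x. \<Sum>k\<in>I'. X k x) = (\<lambda>\<omega>. \<Sum>j<d. y j * \<omega> (i, j))"
  proof
    fix \<omega> :: "nat \<times> nat \<Rightarrow> real"
    have "(\<Sum>k\<in>I'. X k \<omega>) = (\<Sum>j\<in>J'. y j * \<omega> (i, j))"
      unfolding I'_def X_def sum_singleton_times by simp
    also have "\<dots> = (\<Sum>j<d. y j * \<omega> (i, j))"
      by (rule sum.mono_neutral_left) (auto simp: J'_def)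
    finally show "(\<Sum>k\<in>I'. X k \<omega>) = (\<Sum>j<d. y j * \<omega> (i, j))" .
  qed
  have e2: "sqrt (\<Sum>k\<in>I'. (\<bar>y (snd k)\<bar> * ?\<sigma>)\<^sup>2) = ?\<sigma> * L2_set y {..<d}"
  proof -
    have "(\<Sum>k\<in>I'. (\<bar>y (snd k)\<bar> * ?\<sigma>)\<^sup>2) = (\<Sum>j\<in>J'. (y j)\<^sup>2 * ?\<sigma>\<^sup>2)"
      unfolding I'_def sum_singleton_times by (intro sum.cong refl) (simp add: power_mult_distrib power_divide)
    also have "\<dots> = (\<Sum>j<d. (y j)\<^sup>2) * ?\<sigma>\<^sup>2"
      by (subst sum_distrib_right[symmetric], rule arg_cong[where f="\<lambda>t. t * _"], rule sum.mono_neutral_left) (auto simp: J'_def)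
    finally show ?thesis unfolding L2_set_def by (simp add: real_sqrt_mult mult.commute)
  qed
  show ?thesis using S unfolding e1 e2 by simp
qed

lemma row_indep:
  assumes d: "d \<ge> 1" and n: "n \<ge> 1"
  shows "prob_space.indep_vars (gauss_vectors n d) (\<lambda>_. borel) (\<lambda>i \<omega>. \<Sum>j<d. y j * \<omega> (i, j)) {..<n}"
proof -
  let ?M = "gauss_vectors n d"
  interpret prob_space ?M by (rule gv_prob_space[OF d])
  define K where "K i = {i} \<times> {..<d}" for i :: nat
  have "indep_vars (\<lambda>i. Pi\<^sub>M (K i) (\<lambda>_. borel)) (\<lambda>i \<omega>. restrict (\<lambda>k. \<omega> k) (K i)) {..<n}"
    by (rule indep_vars_restrict[OF gv_indep[OF d n]]) (auto simp: K_def disjoint_family_on_def)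
  then have "indep_vars (\<lambda>_. borel) (\<lambda>i \<omega>. (\<lambda>f. \<Sum>j<d. y j * f (i, j)) (restrict (\<lambda>k. \<omega> k) (K i))) {..<n}"
  proof (rule indep_vars_compose2)
    fix i assume "i \<in> {..<n}"
    have "(\<lambda>f. f (i, j)) \<in> borel_measurable (Pi\<^sub>M (K i) (\<lambda>_. borel))" if "j < d" for j
      using that by (intro measurable_component_singleton) (auto simp: K_def)
    then show "(\<lambda>f. \<Sum>j<d. y j * f (i, j)) \<in> borel_measurable (Pi\<^sub>M (K i) (\<lambda>_. borel))"
      by (intro borel_measurable_sum borel_measurable_times) auto
  qed
  moreover have "(\<lambda>i \<omega>. (\<lambda>f. \<Sum>j<d. y j * f (i, j)) (restrict (\<lambda>k. \<omega> k) (K i))) = (\<lambda>i \<omega>. \<Sum>j<d. y j * \<omega> (i, j))"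
    by (intro ext sum.cong) (auto simp: K_def)
  ultimately show ?thesis by simp
qed

lemma exp_neg_le: fixes t :: real assumes t: "t \<ge> 0" shows "exp (- t) \<le> 1 - t + t\<^sup>2 / 2"
proof -
  have e: "1 + t + t\<^sup>2 / 2 \<le> exp t" by (rule exp_lower_Taylor_quadratic[OF t])
  have P: "1 - t + t\<^sup>2 / 2 \<ge> 0"
  proof -
    have "1 - t + t\<^sup>2 / 2 = (t - 1)\<^sup>2 / 2 + 1 / 2" by (simp add: power2_eq_square field_simps)
    then show ?thesis by simp
  qed
  have "(1 - t + t\<^sup>2 / 2) * (1 + t + t\<^sup>2 / 2) = 1 + t^4 / 4"
    by (simp add: algebra_simps power2_eq_square power4_eq_xxxx)
  then have "1 \<le> (1 - t + t\<^sup>2 / 2) * (1 + t + t\<^sup>2 / 2)" by simp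
  also have "\<dots> \<le> (1 - t + t\<^sup>2 / 2) * exp t" by (rule mult_left_mono[OF e P])
  finally have "1 \<le> (1 - t + t\<^sup>2 / 2) * exp t" .
  then show ?thesis by (simp add: exp_minus field_simps)
qed
lemma nd_abs_exp_bound:
  fixes s l :: real assumes s: "s > 0" and l: "l \<ge> 0"
  shows "(\<integral>\<^sup>+x. ennreal (normal_density 0 s x) * ennreal (exp (- l * \<bar>x\<bar>)) \<partial>lborel)
          \<le> ennreal (1 - l * (s * sqrt (2 / pi)) + l\<^sup>2 * s\<^sup>2 / 2)"
proof -
  define g where "g x = normal_density 0 s x * (1 - l * \<bar>x\<bar> + l\<^sup>2 * x\<^sup>2 / 2)" for x
  have i1: "integrable lborel (normal_density 0 s)" using s by simp
  have i2: "integrable lborel (\<lambda>x. normal_density 0 s x * \<bar>x - 0\<bar>^1)"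
    by (rule integrable_normal_moment_abs[OF s])
  have i3: "integrable lborel (\<lambda>x. normal_density 0 s x * (x - 0)^2)"
    by (rule integrable_normal_moment[OF s])
  have v1: "integral\<^sup>L lborel (normal_density 0 s) = 1" using s by simp
  have v2: "integral\<^sup>L lborel (\<lambda>x. normal_density 0 s x * \<bar>x - 0\<bar>^(2*0+1)) = 2 ^ 0 * s ^ (2 * 0 + 1) * fact 0 * sqrt (2 / pi)"
    by (rule integral_normal_moment_abs_odd[OF s])
  have v3: "integral\<^sup>L lborel (\<lambda>x. normal_density 0 s x * (x - 0)^(2*1)) = fact (2 * 1) / ((2 / s\<^sup>2)^1 * fact 1)"
    by (rule integral_normal_moment_even[OF s])
  have gsplit: "g = (\<lambda>x. normal_density 0 s x - l * (normal_density 0 s x * \<bar>x - 0\<bar>^1) + (l\<^sup>2 / 2) * (normal_density 0 s x * (x - 0)^2))"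
    unfolding g_def by (auto simp: algebra_simps)
  have ig: "integrable lborel g" unfolding gsplit using i1 i2 i3 by auto
  have vg: "integral\<^sup>L lborel g = 1 - l * (s * sqrt (2 / pi)) + l\<^sup>2 * s\<^sup>2 / 2"
  proof -
    have "integral\<^sup>L lborel g = integral\<^sup>L lborel (normal_density 0 s) - l * integral\<^sup>L lborel (\<lambda>x. normal_density 0 s x * \<bar>x - 0\<bar>^1)
         + (l\<^sup>2 / 2) * integral\<^sup>L lborel (\<lambda>x. normal_density 0 s x * (x - 0)^2)"
      unfolding gsplit using i1 i2 i3 by simp
    also have "\<dots> = 1 - l * (s * sqrt (2 / pi)) + l\<^sup>2 * s\<^sup>2 / 2"
      using v1 v2 v3 s by (simp add: power2_eq_square)
    finally show ?thesis .
  qed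
  have gnn: "0 \<le> g x" for x
  proof -
    have "0 \<le> 1 - l * \<bar>x\<bar> + l\<^sup>2 * x\<^sup>2 / 2"
    proof -
      have "0 \<le> (1 - l * \<bar>x\<bar>)\<^sup>2 / 2 + 1/2" by simp
      also have "\<dots> = 1 - l * \<bar>x\<bar> + l\<^sup>2 * x\<^sup>2 / 2"
      proof -
        have "(1 - l * \<bar>x\<bar>)\<^sup>2 = 1 - 2 * (l * \<bar>x\<bar>) + l\<^sup>2 * x\<^sup>2" by (simp add: power2_diff power_mult_distrib)
        then show ?thesis by linarith
      qed
      finally show ?thesis .
    qed
    then show ?thesis unfolding g_def by simp
  qed
  have "(\<integral>\<^sup>+x. ennreal (normal_density 0 s x) * ennreal (exp (- l * \<bar>x\<bar>)) \<partial>lborel) \<le> (\<integral>\<^sup>+x. ennreal (g x) \<partial>lborel)"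
  proof (rule nn_integral_mono)
    fix x
    have "exp (- (l * \<bar>x\<bar>)) \<le> 1 - l * \<bar>x\<bar> + (l * \<bar>x\<bar>)\<^sup>2 / 2" by (rule exp_neg_le) (use l in simp)
    then have "normal_density 0 s x * exp (- l * \<bar>x\<bar>) \<le> g x"
      unfolding g_def by (intro mult_left_mono) (auto simp: power_mult_distrib)
    then show "ennreal (normal_density 0 s x) * ennreal (exp (- l * \<bar>x\<bar>)) \<le> ennreal (g x)"
      by (simp add: ennreal_mult[symmetric] ennreal_leI)
  qed
  also have "\<dots> = ennreal (integral\<^sup>L lborel g)"
    by (rule nn_integral_eq_integral[OF ig]) (simp add: gnn)
  finally show ?thesis unfolding vg .
qed

lemma point_bound:
  fixes y :: "nat \<Rightarrow> real" and a :: real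
  assumes d: "d \<ge> 1" and n: "n \<ge> 1" and y: "L2_set y {..<d} > 0" and a: "a < sqrt (2 / pi)"
  shows "measure (gauss_vectors n d)
     {\<omega> \<in> space (gauss_vectors n d). (\<Sum>i<n. \<bar>\<Sum>j<d. y j * \<omega> (i, j)\<bar>) \<le> real n * a * (1 / sqrt (real d) * L2_set y {..<d})}
     \<le> exp (- real n * (sqrt (2 / pi) - a)\<^sup>2 / 2)"
proof -
  let ?M = "gauss_vectors n d"
  interpret prob_space ?M by (rule gv_prob_space[OF d])
  define s where "s = 1 / sqrt (real d) * L2_set y {..<d}"
  define m where "m = sqrt (2 / pi)"
  define l where "l = (m - a) / s"
  define G where "G (i::nat) (\<omega>::nat \<times> nat \<Rightarrow> real) = (\<Sum>j<d. y j * \<omega> (i, j))" for i \<omega>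
  have s: "s > 0" unfolding s_def using d y by simp
  have l: "l > 0" unfolding l_def m_def using s a by simp
  have Gd: "distributed ?M lborel (G i) (normal_density 0 s)" if "i < n" for i
    unfolding G_def s_def by (rule row_distr[OF d that y])
  have Gm[measurable]: "G i \<in> borel_measurable ?M" if "i < n" for i
    using distributed_measurable[OF Gd[OF that]] by simp
  have fm: "(\<lambda>\<omega>. \<Sum>i<n. \<bar>G i \<omega>\<bar>) \<in> borel_measurable ?M"
    by (intro borel_measurable_sum borel_measurable_abs Gm) auto
  define B0 where "B0 = 1 - l * (s * m) + l\<^sup>2 * s\<^sup>2 / 2"
  have B0nn: "B0 \<ge> 0"
  proof -
    have "0 \<le> (l * s - m)\<^sup>2 / 2 + (1 - m\<^sup>2 / 2)"
    proof -
      have "m\<^sup>2 = 2 / pi" unfolding m_def by simp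
      moreover have "2 / pi \<le> 1" using pi_gt3 by simp
      ultimately have "0 \<le> 1 - m\<^sup>2 / 2" by simp
      then show ?thesis by (intro add_nonneg_nonneg) auto
    qed
    also have "\<dots> = B0" unfolding B0_def by (simp add: power2_diff power_mult_distrib field_simps)
    finally show ?thesis .
  qed
  have ch: "emeasure ?M {\<omega> \<in> space ?M. (\<Sum>i<n. \<bar>G i \<omega>\<bar>) \<le> real n * a * s}
      \<le> ennreal (exp (l * (real n * a * s))) * (\<integral>\<^sup>+\<omega>. ennreal (exp (- l * (\<Sum>i<n. \<bar>G i \<omega>\<bar>))) * indicator (space ?M) \<omega> \<partial>?M)"
    by (rule Chernoff_ineq_nn_integral_le[OF l sets.top fm])
  have "(\<integral>\<^sup>+\<omega>. ennreal (exp (- l * (\<Sum>i<n. \<bar>G i \<omega>\<bar>))) * indicator (space ?M) \<omega> \<partial>?M)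
      = (\<integral>\<^sup>+\<omega>. (\<Prod>i<n. ennreal (exp (- l * \<bar>G i \<omega>\<bar>))) \<partial>?M)"
  proof (rule nn_integral_cong)
    fix \<omega> assume "\<omega> \<in> space ?M"
    then have "ennreal (exp (- l * (\<Sum>i<n. \<bar>G i \<omega>\<bar>))) * indicator (space ?M) \<omega> = ennreal (exp (\<Sum>i<n. - l * \<bar>G i \<omega>\<bar>))"
      by (simp add: sum_distrib_left)
    also have "exp (\<Sum>i<n. - l * \<bar>G i \<omega>\<bar>) = (\<Prod>i<n. exp (- l * \<bar>G i \<omega>\<bar>))"
      by (rule exp_sum) simp
    also have "ennreal (\<Prod>i<n. exp (- l * \<bar>G i \<omega>\<bar>)) = (\<Prod>i<n. ennreal (exp (- l * \<bar>G i \<omega>\<bar>)))"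
      by (rule prod_ennreal[symmetric]) simp
    finally show "ennreal (exp (- l * (\<Sum>i<n. \<bar>G i \<omega>\<bar>))) * indicator (space ?M) \<omega> = (\<Prod>i<n. ennreal (exp (- l * \<bar>G i \<omega>\<bar>)))" .
  qed
  also have "\<dots> = (\<Prod>i<n. \<integral>\<^sup>+\<omega>. ennreal (exp (- l * \<bar>G i \<omega>\<bar>)) \<partial>?M)"
  proof -
    have ind: "indep_vars (\<lambda>_. borel) (\<lambda>i \<omega>. ennreal (exp (- l * \<bar>G i \<omega>\<bar>))) {..<n}"
      unfolding G_def by (rule indep_vars_compose2[OF row_indep[OF d n]]) simp
    show ?thesis by (rule indep_vars_nn_integral[OF _ ind]) auto
  qed
  also have "\<dots> \<le> (\<Prod>i<n. ennreal B0)"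
  proof (rule prod_mono_ennreal)
    fix i assume i: "i \<in> {..<n}"
    have "(\<integral>\<^sup>+\<omega>. ennreal (exp (- l * \<bar>G i \<omega>\<bar>)) \<partial>?M) = (\<integral>\<^sup>+x. ennreal (normal_density 0 s x) * ennreal (exp (- l * \<bar>x\<bar>)) \<partial>lborel)"
      by (rule distributed_nn_integral[OF Gd, symmetric]) (use i in auto)
    also have "\<dots> \<le> ennreal B0" unfolding B0_def m_def by (rule nd_abs_exp_bound[OF s]) (use l in simp)
    finally show "(\<integral>\<^sup>+\<omega>. ennreal (exp (- l * \<bar>G i \<omega>\<bar>)) \<partial>?M) \<le> ennreal B0" .
  qed
  also have "(\<Prod>i<n. ennreal B0) = ennreal (B0 ^ n)" using prod_ennreal[of "{..<n}" "\<lambda>_. B0"] B0nn by simp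
  finally have intb: "(\<integral>\<^sup>+\<omega>. ennreal (exp (- l * (\<Sum>i<n. \<bar>G i \<omega>\<bar>))) * indicator (space ?M) \<omega> \<partial>?M) \<le> ennreal (B0 ^ n)" .
  have "emeasure ?M {\<omega> \<in> space ?M. (\<Sum>i<n. \<bar>G i \<omega>\<bar>) \<le> real n * a * s} \<le> ennreal (exp (l * (real n * a * s))) * ennreal (B0 ^ n)"
    using ch intb by (meson order_trans mult_left_mono zero_le)
  also have "ennreal (exp (l * (real n * a * s))) * ennreal (B0 ^ n) = ennreal (exp (l * (real n * a * s)) * B0 ^ n)"
    by (rule ennreal_mult[symmetric]) (use B0nn in auto)
  also have "ennreal (exp (l * (real n * a * s)) * B0 ^ n) \<le> ennreal (exp (- real n * (m - a)\<^sup>2 / 2))"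
  proof (rule ennreal_leI)
    have "B0 \<le> exp (- l * (s * m) + l\<^sup>2 * s\<^sup>2 / 2)"
      unfolding B0_def using exp_ge_add_one_self[of "- l * (s * m) + l\<^sup>2 * s\<^sup>2 / 2"] by linarith
    then have "B0 ^ n \<le> exp (- l * (s * m) + l\<^sup>2 * s\<^sup>2 / 2) ^ n" using B0nn by (intro power_mono) auto
    also have "\<dots> = exp (real n * (- l * (s * m) + l\<^sup>2 * s\<^sup>2 / 2))" by (simp add: exp_of_nat_mult[symmetric])
    finally have "exp (l * (real n * a * s)) * B0 ^ n \<le> exp (l * (real n * a * s)) * exp (real n * (- l * (s * m) + l\<^sup>2 * s\<^sup>2 / 2))"
      by (intro mult_left_mono) auto
    also have "\<dots> = exp (l * (real n * a * s) + real n * (- l * (s * m) + l\<^sup>2 * s\<^sup>2 / 2))" by (simp add: exp_add)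
    also have "l * (real n * a * s) + real n * (- l * (s * m) + l\<^sup>2 * s\<^sup>2 / 2) = - real n * (m - a)\<^sup>2 / 2"
    proof -
      have ls: "l * s = m - a" unfolding l_def using s by simp
      have "l * (real n * a * s) + real n * (- l * (s * m) + l\<^sup>2 * s\<^sup>2 / 2) = real n * ((l * s) * a - (l * s) * m + (l * s)\<^sup>2 / 2)"
        by (simp add: algebra_simps power2_eq_square)
      also have "\<dots> = real n * ((m - a) * a - (m - a) * m + (m - a)\<^sup>2 / 2)" by (simp only: ls)
      also have "\<dots> = - real n * (m - a)\<^sup>2 / 2" by (simp add: power2_eq_square field_simps)
      finally show ?thesis .
    qed
    finally show "exp (l * (real n * a * s)) * B0 ^ n \<le> exp (- real n * (m - a)\<^sup>2 / 2)" .
  qed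
  finally have "emeasure ?M {\<omega> \<in> space ?M. (\<Sum>i<n. \<bar>G i \<omega>\<bar>) \<le> real n * a * s} \<le> ennreal (exp (- real n * (m - a)\<^sup>2 / 2))" .
  then have "measure ?M {\<omega> \<in> space ?M. (\<Sum>i<n. \<bar>G i \<omega>\<bar>) \<le> real n * a * s} \<le> exp (- real n * (m - a)\<^sup>2 / 2)"
    unfolding emeasure_eq_measure by (subst (asm) ennreal_le_iff) auto
  then show ?thesis unfolding G_def s_def m_def .
qed

lemma nd_exp_shift:
  fixes s b x :: real assumes s: "s > 0"
  shows "normal_density 0 s x * exp (b * x) = exp (b\<^sup>2 * s\<^sup>2 / 2) * normal_density (b * s\<^sup>2) s x"
proof -
  have "- (x - 0)\<^sup>2 / (2 * s\<^sup>2) + b * x = b\<^sup>2 * s\<^sup>2 / 2 + - (x - b * s\<^sup>2)\<^sup>2 / (2 * s\<^sup>2)"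
    using s by (simp add: field_simps power2_eq_square)
  then have "exp (- (x - 0)\<^sup>2 / (2 * s\<^sup>2)) * exp (b * x) = exp (b\<^sup>2 * s\<^sup>2 / 2) * exp (- (x - b * s\<^sup>2)\<^sup>2 / (2 * s\<^sup>2))"
    by (simp only: exp_add[symmetric])
  then show ?thesis unfolding normal_density_def by (simp add: mult_ac)
qed

lemma nn_integral_nd: "s > 0 \<Longrightarrow> (\<integral>\<^sup>+x. ennreal (normal_density \<mu> s x) \<partial>lborel) = 1"
  by (subst nn_integral_eq_integral) auto

lemma nd_absexp_bound:
  fixes s :: real assumes s: "s > 0"
  shows "(\<integral>\<^sup>+x. ennreal (normal_density 0 s x) * ennreal (exp ((1 / s) * \<bar>x\<bar>)) \<partial>lborel) \<le> ennreal (exp 2)"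
proof -
  have "(\<integral>\<^sup>+x. ennreal (normal_density 0 s x) * ennreal (exp ((1 / s) * \<bar>x\<bar>)) \<partial>lborel)
     \<le> (\<integral>\<^sup>+x. ennreal (exp (1 / 2) * normal_density (s) s x) + ennreal (exp (1 / 2) * normal_density (- s) s x) \<partial>lborel)"
  proof (rule nn_integral_mono)
    fix x
    have a: "normal_density 0 s x * exp ((1 / s) * x) = exp (1 / 2) * normal_density s s x"
      using nd_exp_shift[OF s, where b="1 / s" and x=x] s by (simp add: power2_eq_square)
    have b: "normal_density 0 s x * exp ((- 1 / s) * x) = exp (1 / 2) * normal_density (- s) s x"
      using nd_exp_shift[OF s, where b="- 1 / s" and x=x] s by (simp add: power2_eq_square)
    have "exp ((1 / s) * \<bar>x\<bar>) \<le> exp ((1 / s) * x) + exp ((- 1 / s) * x)"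
      by (cases "x \<ge> 0") (auto simp: abs_if)
    then have "normal_density 0 s x * exp ((1 / s) * \<bar>x\<bar>) \<le> normal_density 0 s x * exp ((1 / s) * x) + normal_density 0 s x * exp ((- 1 / s) * x)"
      by (simp add: distrib_left[symmetric] mult_left_mono)
    also have "\<dots> = exp (1 / 2) * normal_density s s x + exp (1 / 2) * normal_density (- s) s x" using a b by simp
    finally show "ennreal (normal_density 0 s x) * ennreal (exp ((1 / s) * \<bar>x\<bar>)) \<le> ennreal (exp (1 / 2) * normal_density (s) s x) + ennreal (exp (1 / 2) * normal_density (- s) s x)"
      by (simp add: ennreal_mult[symmetric] ennreal_plus[symmetric] ennreal_leI del: ennreal_plus)
  qed
  also have "\<dots> = (\<integral>\<^sup>+x. ennreal (exp (1 / 2) * normal_density (s) s x) \<partial>lborel) + (\<integral>\<^sup>+x. ennreal (exp (1 / 2) * normal_density (- s) s x) \<partial>lborel)"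
    by (rule nn_integral_add) auto
  also have "(\<integral>\<^sup>+x. ennreal (exp (1 / 2) * normal_density (s) s x) \<partial>lborel) = ennreal (exp (1 / 2))"
    using nn_integral_cmult[of "\<lambda>x. ennreal (normal_density s s x)" lborel "ennreal (exp (1/2))"] nn_integral_nd[OF s, of s]
    by (simp add: ennreal_mult)
  also have "(\<integral>\<^sup>+x. ennreal (exp (1 / 2) * normal_density (- s) s x) \<partial>lborel) = ennreal (exp (1 / 2))"
    using nn_integral_cmult[of "\<lambda>x. ennreal (normal_density (- s) s x)" lborel "ennreal (exp (1/2))"] nn_integral_nd[OF s, of "- s"]
    by (simp add: ennreal_mult)
  also have "ennreal (exp (1 / 2)) + ennreal (exp (1 / 2)) = ennreal (2 * exp (1 / 2))"
    by (simp add: ennreal_plus[symmetric] del: ennreal_plus)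
  also have "\<dots> \<le> ennreal (exp 2)"
  proof (rule ennreal_leI)
    have "2 \<le> exp (3 / 2 :: real)" using exp_ge_add_one_self[of "3/2"] by simp
    then have "2 * exp (1 / 2) \<le> exp (3 / 2) * exp (1 / 2 :: real)" by (intro mult_right_mono) auto
    also have "\<dots> = exp 2" by (simp add: exp_add[symmetric])
    finally show "2 * exp (1 / 2) \<le> exp (2::real)" .
  qed
  finally show ?thesis .
qed

lemma S_bound:
  assumes d: "d \<ge> 1" and n: "n \<ge> 1"
  shows "measure (gauss_vectors n d)
     {\<omega> \<in> space (gauss_vectors n d). 3 * real n * real d * (1 / sqrt (real d)) \<le> (\<Sum>k\<in>{..<n}\<times>{..<d}. \<bar>\<omega> k\<bar>)}
     \<le> exp (- (real n * real d))"
proof -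
  let ?M = "gauss_vectors n d"
  let ?I = "{..<n}\<times>{..<d}"
  interpret prob_space ?M by (rule gv_prob_space[OF d])
  define s where "s = 1 / sqrt (real d)"
  have s: "s > 0" unfolding s_def using d by simp
  define l where "l = 1 / s"
  have l: "l > 0" unfolding l_def using s by simp
  have cm[measurable]: "(\<lambda>\<omega>. \<omega> k) \<in> borel_measurable ?M" if "k \<in> ?I" for k
    using distributed_measurable[OF gv_component[OF d that]] by simp
  have fm: "(\<lambda>\<omega>. \<Sum>k\<in>?I. \<bar>\<omega> k\<bar>) \<in> borel_measurable ?M"
    by (intro borel_measurable_sum borel_measurable_abs cm) auto
  have ch: "emeasure ?M {\<omega> \<in> space ?M. 3 * real n * real d * s \<le> (\<Sum>k\<in>?I. \<bar>\<omega> k\<bar>)}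
      \<le> ennreal (exp (- l * (3 * real n * real d * s))) * (\<integral>\<^sup>+\<omega>. ennreal (exp (l * (\<Sum>k\<in>?I. \<bar>\<omega> k\<bar>))) * indicator (space ?M) \<omega> \<partial>?M)"
    by (rule Chernoff_ineq_nn_integral_ge[OF l sets.top]) (use fm in simp)
  have "(\<integral>\<^sup>+\<omega>. ennreal (exp (l * (\<Sum>k\<in>?I. \<bar>\<omega> k\<bar>))) * indicator (space ?M) \<omega> \<partial>?M)
      = (\<integral>\<^sup>+\<omega>. (\<Prod>k\<in>?I. ennreal (exp (l * \<bar>\<omega> k\<bar>))) \<partial>?M)"
  proof (rule nn_integral_cong)
    fix \<omega> assume "\<omega> \<in> space ?M"
    then have "ennreal (exp (l * (\<Sum>k\<in>?I. \<bar>\<omega> k\<bar>))) * indicator (space ?M) \<omega> = ennreal (exp (\<Sum>k\<in>?I. l * \<bar>\<omega> k\<bar>))"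
      by (simp add: sum_distrib_left)
    also have "exp (\<Sum>k\<in>?I. l * \<bar>\<omega> k\<bar>) = (\<Prod>k\<in>?I. exp (l * \<bar>\<omega> k\<bar>))"
      by (rule exp_sum) simp
    also have "ennreal (\<Prod>k\<in>?I. exp (l * \<bar>\<omega> k\<bar>)) = (\<Prod>k\<in>?I. ennreal (exp (l * \<bar>\<omega> k\<bar>)))"
      by (rule prod_ennreal[symmetric]) simp
    finally show "ennreal (exp (l * (\<Sum>k\<in>?I. \<bar>\<omega> k\<bar>))) * indicator (space ?M) \<omega> = (\<Prod>k\<in>?I. ennreal (exp (l * \<bar>\<omega> k\<bar>)))" .
  qed
  also have "\<dots> = (\<Prod>k\<in>?I. \<integral>\<^sup>+\<omega>. ennreal (exp (l * \<bar>\<omega> k\<bar>)) \<partial>?M)"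
  proof -
    have ind: "indep_vars (\<lambda>_. borel) (\<lambda>k \<omega>. ennreal (exp (l * \<bar>\<omega> k\<bar>))) ?I"
      by (rule indep_vars_compose2[OF gv_indep[OF d n]]) simp
    show ?thesis by (rule indep_vars_nn_integral[OF _ ind]) auto
  qed
  also have "\<dots> \<le> (\<Prod>k\<in>?I. ennreal (exp 2))"
  proof (rule prod_mono_ennreal)
    fix k assume k: "k \<in> ?I"
    have "(\<integral>\<^sup>+\<omega>. ennreal (exp (l * \<bar>\<omega> k\<bar>)) \<partial>?M) = (\<integral>\<^sup>+x. ennreal (normal_density 0 s x) * ennreal (exp (l * \<bar>x\<bar>)) \<partial>lborel)"
      unfolding s_def by (rule distributed_nn_integral[OF gv_component[OF d k], symmetric]) auto
    also have "\<dots> \<le> ennreal (exp 2)" unfolding l_def by (rule nd_absexp_bound[OF s])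
    finally show "(\<integral>\<^sup>+\<omega>. ennreal (exp (l * \<bar>\<omega> k\<bar>)) \<partial>?M) \<le> ennreal (exp 2)" .
  qed
  also have "(\<Prod>k\<in>?I. ennreal (exp 2)) = ennreal (exp 2 ^ (n * d))"
    using prod_ennreal[of ?I "\<lambda>_. exp 2"] by (simp add: card_cartesian_product)
  finally have intb: "(\<integral>\<^sup>+\<omega>. ennreal (exp (l * (\<Sum>k\<in>?I. \<bar>\<omega> k\<bar>))) * indicator (space ?M) \<omega> \<partial>?M) \<le> ennreal (exp 2 ^ (n * d))" .
  have "emeasure ?M {\<omega> \<in> space ?M. 3 * real n * real d * s \<le> (\<Sum>k\<in>?I. \<bar>\<omega> k\<bar>)} \<le> ennreal (exp (- l * (3 * real n * real d * s))) * ennreal (exp 2 ^ (n * d))"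
    using ch intb by (meson order_trans mult_left_mono zero_le)
  also have "\<dots> = ennreal (exp (- l * (3 * real n * real d * s)) * exp 2 ^ (n * d))"
    by (rule ennreal_mult[symmetric]) auto
  also have "exp (- l * (3 * real n * real d * s)) * exp 2 ^ (n * d) = exp (- (real n * real d))"
  proof -
    have "l * s = 1" unfolding l_def using s by simp
    then have e1: "- l * (3 * real n * real d * s) = - 3 * (real n * real d)" by (simp add: algebra_simps)
    have e2: "exp 2 ^ (n * d) = exp (2 * (real n * real d))"
      by (simp add: exp_of_nat_mult[symmetric] mult_ac)
    have "exp (- l * (3 * real n * real d * s)) * exp 2 ^ (n * d) = exp (- 3 * (real n * real d)) * exp (2 * (real n * real d))"
      by (simp only: e1 e2)
    also have "\<dots> = exp (- 3 * (real n * real d) + 2 * (real n * real d))" by (rule exp_add[symmetric])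
    also have "- 3 * (real n * real d) + 2 * (real n * real d) = - (real n * real d)" by simp
    finally show ?thesis .
  qed
  finally have "emeasure ?M {\<omega> \<in> space ?M. 3 * real n * real d * s \<le> (\<Sum>k\<in>?I. \<bar>\<omega> k\<bar>)} \<le> ennreal (exp (- (real n * real d)))" .
  then have "measure ?M {\<omega> \<in> space ?M. 3 * real n * real d * s \<le> (\<Sum>k\<in>?I. \<bar>\<omega> k\<bar>)} \<le> exp (- (real n * real d))"
    unfolding emeasure_eq_measure by (subst (asm) ennreal_le_iff) auto
  then show ?thesis unfolding s_def .
qed

definition Fw :: "nat \<Rightarrow> nat \<Rightarrow> (nat \<times> nat \<Rightarrow> real) \<Rightarrow> (nat \<Rightarrow> real) \<Rightarrow> real" where
  "Fw n d \<omega> x = (1 / real n) * (\<Sum>i<n. \<bar>\<Sum>j<d. x j * \<omega> (i, j)\<bar>)"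

definition Ww :: "nat \<Rightarrow> nat \<Rightarrow> (nat \<times> nat \<Rightarrow> real) \<Rightarrow> real" where
  "Ww n d \<omega> = (\<Sum>i<n. \<Sum>j<d. \<bar>\<omega> (i, j)\<bar>)"

lemma Fw_nonneg: "Fw n d \<omega> x \<ge> 0"
  unfolding Fw_def by (auto intro!: sum_nonneg)

lemma Fw_avg: "avg_abs_proj n d (\<lambda>i j. \<omega> (i, j)) x = Fw n d \<omega> x"
  unfolding avg_abs_proj_def Fw_def inner_d_def ..

lemma Fw_approx:
  assumes n: "n \<ge> 1" and xy: "\<forall>j<d. \<bar>x j - y j\<bar> \<le> e"
  shows "Fw n d \<omega> x \<ge> Fw n d \<omega> y - e * Ww n d \<omega> / real n"
proof -
  have e: "e \<ge> 0" if "d > 0" using xy that by (meson abs_ge_zero order_trans)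
  have row: "\<bar>\<Sum>j<d. x j * \<omega> (i, j)\<bar> \<ge> \<bar>\<Sum>j<d. y j * \<omega> (i, j)\<bar> - e * (\<Sum>j<d. \<bar>\<omega> (i, j)\<bar>)" for i
  proof -
    have "\<bar>\<Sum>j<d. (x j - y j) * \<omega> (i, j)\<bar> \<le> (\<Sum>j<d. \<bar>(x j - y j) * \<omega> (i, j)\<bar>)" by (rule sum_abs)
    also have "\<dots> \<le> (\<Sum>j<d. e * \<bar>\<omega> (i, j)\<bar>)"
      by (intro sum_mono) (use xy in \<open>auto simp: abs_mult intro: mult_right_mono\<close>)
    also have "\<dots> = e * (\<Sum>j<d. \<bar>\<omega> (i, j)\<bar>)" by (simp add: sum_distrib_left)
    finally have h: "\<bar>\<Sum>j<d. (x j - y j) * \<omega> (i, j)\<bar> \<le> e * (\<Sum>j<d. \<bar>\<omega> (i, j)\<bar>)" .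
    have "(\<Sum>j<d. y j * \<omega> (i, j)) = (\<Sum>j<d. x j * \<omega> (i, j)) - (\<Sum>j<d. (x j - y j) * \<omega> (i, j))"
      by (simp add: sum_subtractf left_diff_distrib)
    then have "\<bar>\<Sum>j<d. y j * \<omega> (i, j)\<bar> \<le> \<bar>\<Sum>j<d. x j * \<omega> (i, j)\<bar> + \<bar>\<Sum>j<d. (x j - y j) * \<omega> (i, j)\<bar>"
      by (simp add: abs_triangle_ineq4)
    then show ?thesis using h by linarith
  qed
  have "(\<Sum>i<n. \<bar>\<Sum>j<d. x j * \<omega> (i, j)\<bar>) \<ge> (\<Sum>i<n. \<bar>\<Sum>j<d. y j * \<omega> (i, j)\<bar> - e * (\<Sum>j<d. \<bar>\<omega> (i, j)\<bar>))"
    by (intro sum_mono row)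
  also have "(\<Sum>i<n. \<bar>\<Sum>j<d. y j * \<omega> (i, j)\<bar> - e * (\<Sum>j<d. \<bar>\<omega> (i, j)\<bar>)) = (\<Sum>i<n. \<bar>\<Sum>j<d. y j * \<omega> (i, j)\<bar>) - e * Ww n d \<omega>"
    unfolding Ww_def by (simp add: sum_subtractf sum_distrib_left)
  finally have "(\<Sum>i<n. \<bar>\<Sum>j<d. y j * \<omega> (i, j)\<bar>) - e * Ww n d \<omega> \<le> (\<Sum>i<n. \<bar>\<Sum>j<d. x j * \<omega> (i, j)\<bar>)" .
  then have "(1 / real n) * ((\<Sum>i<n. \<bar>\<Sum>j<d. y j * \<omega> (i, j)\<bar>) - e * Ww n d \<omega>) \<le> (1 / real n) * (\<Sum>i<n. \<bar>\<Sum>j<d. x j * \<omega> (i, j)\<bar>)"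
    by (intro mult_left_mono) auto
  then show ?thesis unfolding Fw_def using n by (simp add: right_diff_distrib)
qed

lemma sphere_L2: "x \<in> sphere_d d \<Longrightarrow> L2_set x {..<d} = 1"
  unfolding sphere_d_def L2_set_def by simp

lemma sphere_coord: assumes "x \<in> sphere_d d" "j < d" shows "\<bar>x j\<bar> \<le> 1"
proof -
  have "(x j)\<^sup>2 \<le> (\<Sum>j<d. (x j)\<^sup>2)" by (rule member_le_sum) (use assms in auto)
  then have "(x j)\<^sup>2 \<le> 1" using assms unfolding sphere_d_def by simp
  then show ?thesis by (simp add: abs_square_le_1)
qed

lemma L2_approx:
  assumes x: "x \<in> sphere_d d" and xy: "\<forall>j<d. \<bar>x j - y j\<bar> \<le> e"
  shows "L2_set y {..<d} \<ge> 1 - real d * e"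
proof -
  have "L2_set (\<lambda>j. y j + (x j - y j)) {..<d} \<le> L2_set y {..<d} + L2_set (\<lambda>j. x j - y j) {..<d}"
    by (rule L2_set_triangle_ineq)
  moreover have "L2_set (\<lambda>j. y j + (x j - y j)) {..<d} = 1" using sphere_L2[OF x] by simp
  moreover have "L2_set (\<lambda>j. x j - y j) {..<d} \<le> real d * e"
  proof -
    have "L2_set (\<lambda>j. x j - y j) {..<d} \<le> (\<Sum>j<d. \<bar>x j - y j\<bar>)" by (rule L2_set_le_sum_abs)
    also have "\<dots> \<le> (\<Sum>j<d. e)" by (intro sum_mono) (use xy in auto)
    also have "\<dots> = real d * e" by simp
    finally show ?thesis .
  qed
  ultimately show ?thesis by linarith
qed

lemma Fw_homog: "Fw n d \<omega> (\<lambda>j. t * q j) = \<bar>t\<bar> * Fw n d \<omega> q"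
proof -
  have "(\<Sum>i<n. \<bar>\<Sum>j<d. t * q j * \<omega> (i, j)\<bar>) = \<bar>t\<bar> * (\<Sum>i<n. \<bar>\<Sum>j<d. q j * \<omega> (i, j)\<bar>)"
    by (simp add: sum_distrib_left[symmetric] mult.assoc abs_mult)
  then show ?thesis unfolding Fw_def by (simp add: mult_ac)
qed

lemma comp_meas: "i < n \<Longrightarrow> j < d \<Longrightarrow> (\<lambda>\<omega>. \<omega> (i, j)) \<in> borel_measurable (gauss_vectors n d)"
proof -
  assume "i < n" "j < d"
  then have "(\<lambda>\<omega>. \<omega> (i, j)) \<in> measurable (gauss_vectors n d) (density lborel (normal_density 0 (1 / sqrt (real d))))"
    unfolding gauss_vectors_def by (intro measurable_component_singleton) auto
  then show ?thesis using measurable_cong_sets[of "gauss_vectors n d" "gauss_vectors n d" "density lborel (normal_density 0 (1 / sqrt (real d)))" borel] by simp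
qed

lemma Fw_meas: "(\<lambda>\<omega>. Fw n d \<omega> q) \<in> borel_measurable (gauss_vectors n d)"
  unfolding Fw_def
  by (intro borel_measurable_times borel_measurable_const borel_measurable_sum borel_measurable_abs comp_meas) auto

lemma Ww_meas: "(\<lambda>\<omega>. Ww n d \<omega>) \<in> borel_measurable (gauss_vectors n d)"
  unfolding Ww_def
  by (intro borel_measurable_sum borel_measurable_abs comp_meas) auto

definition Qd :: "nat \<Rightarrow> (nat \<Rightarrow> real) set" where
  "Qd d = {q. (\<forall>j<d. q j \<in> \<rat>) \<and> (\<forall>j\<ge>d. q j = 0)}"

lemma Qd_countable: "countable (Qd d)"
proof -
  have "Qd d \<subseteq> (\<lambda>xs j. if j < length xs then xs ! j else 0) ` {xs \<in> lists \<rat>. length xs = d}"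
  proof
    fix q assume q: "q \<in> Qd d"
    let ?xs = "map q [0..<d]"
    have "?xs \<in> {xs \<in> lists \<rat>. length xs = d}" using q unfolding Qd_def by auto
    moreover have "q = (\<lambda>j. if j < length ?xs then ?xs ! j else 0)" using q unfolding Qd_def by auto
    ultimately show "q \<in> (\<lambda>xs j. if j < length xs then xs ! j else 0) ` {xs \<in> lists \<rat>. length xs = d}" by blast
  qed
  moreover have "countable {xs \<in> lists \<rat>. length xs = d}"
    by (rule countable_subset[OF _ countable_lists[OF countable_rat]]) auto
  ultimately show ?thesis by (blast intro: countable_subset countable_image)
qed

lemma Qd_dense:
  assumes e: "e > 0"
  shows "\<exists>q\<in>Qd d. \<forall>j<d. \<bar>x j - q j\<bar> \<le> e"
proof -
  have "\<forall>j. \<exists>r. r \<in> \<rat> \<and> x j < r \<and> r < x j + e"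
    using Rats_dense_in_real e by (metis less_add_same_cancel1)
  then obtain r where r: "\<And>j. r j \<in> \<rat> \<and> x j < r j \<and> r j < x j + e" by metis
  define q where "q j = (if j < d then r j else 0)" for j
  have "q \<in> Qd d" unfolding Qd_def q_def using r by auto
  moreover have "\<forall>j<d. \<bar>x j - q j\<bar> \<le> e"
  proof (intro allI impI)
    fix j assume "j < d"
    then have "q j = r j" unfolding q_def by simp
    moreover have "x j < r j" "r j < x j + e" using r[of j] by auto
    ultimately show "\<bar>x j - q j\<bar> \<le> e" by (simp add: abs_if)
  qed
  ultimately show ?thesis by blast
qed

lemma T_eq:
  assumes n: "n \<ge> 1" and c: "c \<ge> 0"
  shows "(\<forall>x\<in>sphere_d d. c \<le> Fw n d \<omega> x) \<longleftrightarrow> (\<forall>q\<in>Qd d. c * L2_set q {..<d} \<le> Fw n d \<omega> q)"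
proof
  assume H: "\<forall>x\<in>sphere_d d. c \<le> Fw n d \<omega> x"
  show "\<forall>q\<in>Qd d. c * L2_set q {..<d} \<le> Fw n d \<omega> q"
  proof
    fix q assume "q \<in> Qd d"
    define L where "L = L2_set q {..<d}"
    show "c * L2_set q {..<d} \<le> Fw n d \<omega> q"
    proof (cases "L = 0")
      case True then show ?thesis using Fw_nonneg by (simp add: L_def)
    next
      case False
      then have Lp: "L > 0" unfolding L_def using L2_set_nonneg[of q "{..<d}"] by linarith
      have "(\<lambda>j. (1 / L) * q j) \<in> sphere_d d"
      proof -
        have LL: "(\<Sum>j<d. (q j)\<^sup>2) = L\<^sup>2" unfolding L_def L2_set_def by (simp add: sum_nonneg)
        have "(\<Sum>j<d. ((1 / L) * q j)\<^sup>2) = (\<Sum>j<d. (q j)\<^sup>2) / L\<^sup>2"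
          by (simp add: power_divide sum_divide_distrib)
        then have "(\<Sum>j<d. ((1 / L) * q j)\<^sup>2) = 1" using Lp unfolding LL by simp
        then show ?thesis unfolding sphere_d_def by simp
      qed
      then have "c \<le> Fw n d \<omega> (\<lambda>j. (1 / L) * q j)" using H by blast
      also have "\<dots> = (1 / L) * Fw n d \<omega> q" using Fw_homog[of n d \<omega> "1 / L" q] Lp by simp
      finally show ?thesis using Lp unfolding L_def[symmetric] by (simp add: field_simps)
    qed
  qed
next
  assume H: "\<forall>q\<in>Qd d. c * L2_set q {..<d} \<le> Fw n d \<omega> q"
  show "\<forall>x\<in>sphere_d d. c \<le> Fw n d \<omega> x"
  proof (rule ballI, rule ccontr)
    fix x assume x: "x \<in> sphere_d d" and nc: "\<not> c \<le> Fw n d \<omega> x"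
    define W where "W = Ww n d \<omega>"
    have W0: "W \<ge> 0" unfolding W_def Ww_def by (auto intro!: sum_nonneg)
    define e where "e = (c - Fw n d \<omega> x) / (c * real d + W / real n + 1)"
    have den: "c * real d + W / real n + 1 > 0" using c W0 n by (simp add: add_nonneg_pos)
    have e: "e > 0" unfolding e_def using nc den by simp
    obtain q where q: "q \<in> Qd d" and xq: "\<forall>j<d. \<bar>x j - q j\<bar> \<le> e" using Qd_dense[OF e] by blast
    have "Fw n d \<omega> x \<ge> Fw n d \<omega> q - e * W / real n" unfolding W_def by (rule Fw_approx[OF n xq])
    moreover have "Fw n d \<omega> q \<ge> c * L2_set q {..<d}" using H q by blast
    moreover have "c * L2_set q {..<d} \<ge> c * (1 - real d * e)"
      by (rule mult_left_mono[OF L2_approx[OF x xq] c])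
    ultimately have "Fw n d \<omega> x \<ge> c - e * (c * real d + W / real n)" by (simp add: algebra_simps)
    moreover have "e * (c * real d + W / real n) < c - Fw n d \<omega> x"
    proof -
      have "e * (c * real d + W / real n) < e * (c * real d + W / real n + 1)" using e by simp
      also have "\<dots> = c - Fw n d \<omega> x" unfolding e_def using den by simp
      finally show ?thesis .
    qed
    ultimately show False by linarith
  qed
qed

lemma T_meas:
  assumes n: "n \<ge> 1" and c: "c \<ge> 0"
  shows "{\<omega> \<in> space (gauss_vectors n d). \<forall>x\<in>sphere_d d. c \<le> Fw n d \<omega> x} \<in> sets (gauss_vectors n d)"
proof -
  let ?M = "gauss_vectors n d"
  have "{\<omega> \<in> space ?M. \<forall>x\<in>sphere_d d. c \<le> Fw n d \<omega> x} = (\<Inter>q\<in>Qd d. {\<omega> \<in> space ?M. c * L2_set q {..<d} \<le> Fw n d \<omega> q})"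
  proof -
    have "(\<lambda>_. 0::real) \<in> Qd d" unfolding Qd_def by auto
    then show ?thesis using T_eq[OF n c] by blast
  qed
  also have "\<dots> \<in> sets ?M"
  proof (rule sets.countable_INT')
    show "countable (Qd d)" by (rule Qd_countable)
    show "Qd d \<noteq> {}" unfolding Qd_def by auto
    show "(\<lambda>q. {\<omega> \<in> space ?M. c * L2_set q {..<d} \<le> Fw n d \<omega> q}) ` Qd d \<subseteq> sets ?M"
      using Fw_meas by auto
  qed
  finally show ?thesis .
qed

definition grid :: "real \<Rightarrow> nat \<Rightarrow> nat \<Rightarrow> (nat \<Rightarrow> real) set" where
  "grid \<delta> K d = PiE {..<d} (\<lambda>_. (\<lambda>k. \<delta> * real_of_int k) ` {- int K..int K})"

lemma grid_finite: "finite (grid \<delta> K d)"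
  unfolding grid_def by (intro finite_PiE) auto

lemma grid_card: "card (grid \<delta> K d) \<le> (2 * K + 1) ^ d"
proof -
  have "card (grid \<delta> K d) = (\<Prod>j<d. card ((\<lambda>k. \<delta> * real_of_int k) ` {- int K..int K}))"
    unfolding grid_def by (rule card_PiE) simp
  also have "\<dots> \<le> (\<Prod>j<d. 2 * K + 1)"
  proof (rule prod_mono)
    fix j assume "j \<in> {..<d}"
    have "card ((\<lambda>k. \<delta> * real_of_int k) ` {- int K..int K}) \<le> card {- int K..int K}" by (rule card_image_le) simp
    also have "\<dots> = 2 * K + 1" by simp
    finally show "0 \<le> card ((\<lambda>k. \<delta> * real_of_int k) ` {- int K..int K}) \<and> card ((\<lambda>k. \<delta> * real_of_int k) ` {- int K..int K}) \<le> 2 * K + 1" by simp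
  qed
  also have "\<dots> = (2 * K + 1) ^ d" by simp
  finally show ?thesis .
qed

lemma grid_round:
  assumes \<delta>: "\<delta> > 0" and K: "1 / \<delta> \<le> real K" and x: "x \<in> sphere_d d"
  shows "\<exists>y\<in>grid \<delta> K d. \<forall>j<d. \<bar>x j - y j\<bar> \<le> \<delta> / 2"
proof -
  define y where "y = restrict (\<lambda>j. \<delta> * real_of_int (round (x j / \<delta>))) {..<d}"
  have "y \<in> grid \<delta> K d"
    unfolding grid_def
  proof (rule PiE_I)
    fix j assume j: "j \<in> {..<d}"
    have xj: "\<bar>x j\<bar> \<le> 1" using sphere_coord[OF x] j by simp
    have "\<bar>x j / \<delta>\<bar> \<le> 1 / \<delta>" using xj \<delta> by (simp add: abs_div divide_right_mono)
    then have z: "x j / \<delta> \<le> real K" "- real K \<le> x j / \<delta>" using K by linarith+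
    have "round (x j / \<delta>) \<le> round (real K)" by (rule round_mono[OF z(1)])
    then have r1: "round (x j / \<delta>) \<le> int K" by simp
    have "round (- real K) \<le> round (x j / \<delta>)" by (rule round_mono[OF z(2)])
    moreover have "round (- real K) = - int K" by (metis of_int_minus of_int_of_nat_eq round_of_int)
    ultimately have r2: "- int K \<le> round (x j / \<delta>)" by simp
    show "y j \<in> (\<lambda>k. \<delta> * real_of_int k) ` {- int K..int K}"
      unfolding y_def using j r1 r2 by auto
  next
    fix j assume "j \<notin> {..<d}" then show "y j = undefined" unfolding y_def by simp
  qed
  moreover have "\<forall>j<d. \<bar>x j - y j\<bar> \<le> \<delta> / 2"
  proof (intro allI impI)
    fix j assume "j < d"
    then have "x j - y j = \<delta> * (x j / \<delta> - real_of_int (round (x j / \<delta>)))"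
      unfolding y_def using \<delta> by (simp add: right_diff_distrib)
    then have "\<bar>x j - y j\<bar> = \<delta> * \<bar>real_of_int (round (x j / \<delta>)) - x j / \<delta>\<bar>"
      using \<delta> by (simp add: abs_mult abs_minus_commute)
    also have "\<dots> \<le> \<delta> * (1 / 2)" using \<delta> by (intro mult_left_mono of_int_round_abs_le) auto
    finally show "\<bar>x j - y j\<bar> \<le> \<delta> / 2" by simp
  qed
  ultimately show ?thesis by blast
qed

lemma net_det:
  assumes n: "n \<ge> 1" and d: "d \<ge> 1" and \<delta>: "\<delta> > 0" and K: "1 / \<delta> \<le> real K"
    and a1: "0 < a1" "a1 \<le> 1" and a0: "a0 \<le> a1 - 2 * real d * \<delta>" and d\<delta>: "real d * \<delta> < 2"
    and s: "s > 0"
    and W: "Ww n d \<omega> \<le> 3 * real n * real d * s"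
    and G: "\<forall>y\<in>grid \<delta> K d. L2_set y {..<d} > 0 \<longrightarrow> a1 * (s * L2_set y {..<d}) < Fw n d \<omega> y"
  shows "\<forall>x\<in>sphere_d d. a0 * s \<le> Fw n d \<omega> x"
proof
  fix x assume x: "x \<in> sphere_d d"
  obtain y where y: "y \<in> grid \<delta> K d" and xy: "\<forall>j<d. \<bar>x j - y j\<bar> \<le> \<delta> / 2"
    using grid_round[OF \<delta> K x] by blast
  define e where "e = \<delta> / 2"
  have e: "e \<ge> 0" unfolding e_def using \<delta> by simp
  have L: "L2_set y {..<d} \<ge> 1 - real d * e" using L2_approx[OF x] xy unfolding e_def by blast
  have de: "real d * e < 1" unfolding e_def using d\<delta> by simp
  have Lp: "L2_set y {..<d} > 0" using L de by linarith
  have Fy: "a1 * (s * L2_set y {..<d}) < Fw n d \<omega> y" using G y Lp by blast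
  have Fx: "Fw n d \<omega> x \<ge> Fw n d \<omega> y - e * Ww n d \<omega> / real n" using Fw_approx[OF n] xy unfolding e_def by blast
  have "e * Ww n d \<omega> / real n \<le> e * (3 * real n * real d * s) / real n"
    using W e by (intro divide_right_mono mult_left_mono) auto
  also have "\<dots> = 3 * (real d * e) * s" using n by (simp add: field_simps)
  finally have EW: "e * Ww n d \<omega> / real n \<le> 3 * (real d * e) * s" .
  have "a1 * (s * (1 - real d * e)) \<le> a1 * (s * L2_set y {..<d})"
    using L a1 s by (intro mult_left_mono) auto
  then have "Fw n d \<omega> x \<ge> a1 * (s * (1 - real d * e)) - 3 * (real d * e) * s"
    using Fx Fy EW by linarith
  moreover have "a1 * (s * (1 - real d * e)) - 3 * (real d * e) * s \<ge> a0 * s"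
  proof -
    have de0: "real d * e \<ge> 0" using e by simp
    have "a1 * (real d * e) \<le> 1 * (real d * e)" using a1 de0 by (intro mult_right_mono) auto
    then have "0 \<le> s * (real d * e - a1 * (real d * e))" using s by (intro mult_nonneg_nonneg) auto
    moreover have "a1 * (s * (1 - real d * e)) - 3 * (real d * e) * s - s * (a1 - 4 * (real d * e)) = s * (real d * e - a1 * (real d * e))"
      by (simp add: algebra_simps)
    ultimately have A: "a1 * (s * (1 - real d * e)) - 3 * (real d * e) * s \<ge> s * (a1 - 4 * (real d * e))" by linarith
    have "a1 - 4 * (real d * e) \<ge> a0" using a0 unfolding e_def by (simp add: mult_ac)
    then have "s * (a1 - 4 * (real d * e)) \<ge> s * a0" using s by (intro mult_left_mono) auto
    then show ?thesis using A by (simp add: mult.commute)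
  qed
  ultimately show "a0 * s \<le> Fw n d \<omega> x" by linarith
qed

lemma pair_meas: "k \<in> {..<n} \<times> {..<d} \<Longrightarrow> (\<lambda>\<omega>. \<omega> k) \<in> borel_measurable (gauss_vectors n d)"
  using comp_meas[of "fst k" n "snd k" d] by (cases k) auto

lemma main_a:
  assumes d: "d \<ge> 1" and n: "n \<ge> 1" and a0: "0 < a0" "a0 < sqrt (2 / pi)"
  defines "\<eta> \<equiv> (sqrt (2 / pi) - a0) / 2"
  defines "\<delta> \<equiv> \<eta> / (2 * real d)"
  defines "K \<equiv> nat \<lceil>1 / \<delta>\<rceil>"
  shows "measure (gauss_vectors n d) {\<omega> \<in> space (gauss_vectors n d). \<forall>x\<in>sphere_d d. a0 * (1 / sqrt (real d)) \<le> Fw n d \<omega> x}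
     \<ge> 1 - exp (- (real n * real d)) - real (card (grid \<delta> K d)) * exp (- real n * \<eta>\<^sup>2 / 2)"
proof -
  let ?M = "gauss_vectors n d"
  interpret prob_space ?M by (rule gv_prob_space[OF d])
  define s where "s = 1 / sqrt (real d)"
  define m where "m = sqrt (2 / pi)"
  define a1 where "a1 = a0 + \<eta>"
  have s: "s > 0" unfolding s_def using d by simp
  have m1: "m < 1" unfolding m_def using pi_gt3 by simp
  have \<eta>: "\<eta> > 0" unfolding \<eta>_def using a0 by simp
  have \<delta>: "\<delta> > 0" unfolding \<delta>_def using \<eta> d by simp
  have Kb: "1 / \<delta> \<le> real K" unfolding K_def by (rule real_nat_ceiling_ge)
  have a1p: "0 < a1" unfolding a1_def using a0 \<eta> by simp
  have ma1: "m - a1 = \<eta>" unfolding a1_def \<eta>_def m_def by (simp add: field_simps)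
  have a1m: "a1 < m" using ma1 \<eta> by simp
  have a11: "a1 \<le> 1" using a1m m1 by simp
  have d\<delta>: "real d * \<delta> = \<eta> / 2" unfolding \<delta>_def using d by simp
  have a0b: "a0 \<le> a1 - 2 * real d * \<delta>" using d\<delta> unfolding a1_def by simp
  have d\<delta>2: "real d * \<delta> < 2" using d\<delta> ma1 a1p m1 by simp
  define BW where "BW = {\<omega> \<in> space ?M. 3 * real n * real d * (1 / sqrt (real d)) \<le> (\<Sum>k\<in>{..<n}\<times>{..<d}. \<bar>\<omega> k\<bar>)}"
  define By where "By y = {\<omega> \<in> space ?M. (\<Sum>i<n. \<bar>\<Sum>j<d. y j * \<omega> (i, j)\<bar>) \<le> real n * a1 * (1 / sqrt (real d) * L2_set y {..<d})}" for y
  define Gp where "Gp = {y \<in> grid \<delta> K d. L2_set y {..<d} > 0}"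
  define T where "T = {\<omega> \<in> space ?M. \<forall>x\<in>sphere_d d. a0 * (1 / sqrt (real d)) \<le> Fw n d \<omega> x}"
  have finGp: "finite Gp" unfolding Gp_def using grid_finite by auto
  have cardGp: "card Gp \<le> card (grid \<delta> K d)" unfolding Gp_def by (rule card_mono[OF grid_finite]) auto
  have BWm: "BW \<in> sets ?M"
  proof -
    have fm: "(\<lambda>\<omega>. \<Sum>k\<in>{..<n}\<times>{..<d}. \<bar>\<omega> k\<bar>) \<in> borel_measurable ?M"
      by (intro borel_measurable_sum borel_measurable_abs pair_meas) auto
    have "BW = (\<lambda>\<omega>. \<Sum>k\<in>{..<n}\<times>{..<d}. \<bar>\<omega> k\<bar>) -` {3 * real n * real d * (1 / sqrt (real d))..} \<inter> space ?M"
      unfolding BW_def by auto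
    then show ?thesis using measurable_sets[OF fm, of "{3 * real n * real d * (1 / sqrt (real d))..}"] by simp
  qed
  have Bym: "By y \<in> sets ?M" for y
  proof -
    have fm: "(\<lambda>\<omega>. \<Sum>i<n. \<bar>\<Sum>j<d. y j * \<omega> (i, j)\<bar>) \<in> borel_measurable ?M"
      by (intro borel_measurable_sum borel_measurable_abs borel_measurable_times borel_measurable_const comp_meas) auto
    have "By y = (\<lambda>\<omega>. \<Sum>i<n. \<bar>\<Sum>j<d. y j * \<omega> (i, j)\<bar>) -` {..real n * a1 * (1 / sqrt (real d) * L2_set y {..<d})} \<inter> space ?M"
      unfolding By_def by auto
    then show ?thesis using measurable_sets[OF fm, of "{..real n * a1 * (1 / sqrt (real d) * L2_set y {..<d})}"] by simp
  qed
  have UBm: "(\<Union>y\<in>Gp. By y) \<in> sets ?M" using Bym finGp by auto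
  have Tm: "T \<in> sets ?M" unfolding T_def
    by (rule T_meas[OF n]) (use a0 d in simp)
  have sub: "space ?M - (BW \<union> (\<Union>y\<in>Gp. By y)) \<subseteq> T"
  proof
    fix \<omega> assume \<omega>: "\<omega> \<in> space ?M - (BW \<union> (\<Union>y\<in>Gp. By y))"
    have "Ww n d \<omega> = (\<Sum>k\<in>{..<n}\<times>{..<d}. \<bar>\<omega> k\<bar>)"
      unfolding Ww_def by (simp add: sum.cartesian_product)
    then have W: "Ww n d \<omega> \<le> 3 * real n * real d * s" using \<omega> unfolding BW_def s_def by auto
    have G: "\<forall>y\<in>grid \<delta> K d. L2_set y {..<d} > 0 \<longrightarrow> a1 * (s * L2_set y {..<d}) < Fw n d \<omega> y"
    proof (intro ballI impI)
      fix y assume y: "y \<in> grid \<delta> K d" "L2_set y {..<d} > 0"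
      then have "\<omega> \<notin> By y" using \<omega> unfolding Gp_def by auto
      then have "real n * a1 * (s * L2_set y {..<d}) < (\<Sum>i<n. \<bar>\<Sum>j<d. y j * \<omega> (i, j)\<bar>)"
        using \<omega> unfolding By_def s_def by auto
      also have "\<dots> = real n * Fw n d \<omega> y" unfolding Fw_def using n by simp
      finally show "a1 * (s * L2_set y {..<d}) < Fw n d \<omega> y" using n by (simp add: mult.assoc)
    qed
    have "\<forall>x\<in>sphere_d d. a0 * s \<le> Fw n d \<omega> x"
      by (rule net_det[OF n d \<delta> Kb a1p a11 a0b d\<delta>2 s W G])
    then show "\<omega> \<in> T" using \<omega> unfolding T_def s_def by auto
  qed
  have "prob (BW \<union> (\<Union>y\<in>Gp. By y)) \<le> prob BW + prob (\<Union>y\<in>Gp. By y)"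
    by (rule measure_Un_le[OF BWm UBm])
  also have "prob BW \<le> exp (- (real n * real d))" unfolding BW_def by (rule S_bound[OF d n])
  also have "prob (\<Union>y\<in>Gp. By y) \<le> (\<Sum>y\<in>Gp. prob (By y))"
    by (rule finite_measure_subadditive_finite[OF finGp]) (use Bym in auto)
  also have "\<dots> \<le> (\<Sum>y\<in>Gp. exp (- real n * \<eta>\<^sup>2 / 2))"
  proof (rule sum_mono)
    fix y assume "y \<in> Gp"
    then have yL: "L2_set y {..<d} > 0" unfolding Gp_def by auto
    have "prob (By y) \<le> exp (- real n * (sqrt (2 / pi) - a1)\<^sup>2 / 2)"
      unfolding By_def by (rule point_bound[OF d n yL]) (use a1m m_def in simp)
    then show "prob (By y) \<le> exp (- real n * \<eta>\<^sup>2 / 2)" using ma1 unfolding m_def by simp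
  qed
  also have "\<dots> = real (card Gp) * exp (- real n * \<eta>\<^sup>2 / 2)" by simp
  also have "\<dots> \<le> real (card (grid \<delta> K d)) * exp (- real n * \<eta>\<^sup>2 / 2)"
    using cardGp by (intro mult_right_mono) auto
  finally have pB: "prob (BW \<union> (\<Union>y\<in>Gp. By y)) \<le> exp (- (real n * real d)) + real (card (grid \<delta> K d)) * exp (- real n * \<eta>\<^sup>2 / 2)"
    by simp
  have "prob (space ?M - (BW \<union> (\<Union>y\<in>Gp. By y))) = 1 - prob (BW \<union> (\<Union>y\<in>Gp. By y))"
    by (rule prob_compl) (use BWm UBm in auto)
  moreover have "prob (space ?M - (BW \<union> (\<Union>y\<in>Gp. By y))) \<le> prob T"
    by (rule finite_measure_mono[OF sub Tm])
  ultimately have "prob T \<ge> 1 - prob (BW \<union> (\<Union>y\<in>Gp. By y))" by simp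
  then show ?thesis using pB unfolding T_def by simp
qed

lemma ln_sq_bound: fixes x :: real assumes x: "x \<ge> 1" shows "(ln x)\<^sup>2 \<le> 16 * sqrt x"
proof -
  have x0: "x > 0" using x by simp
  have q: "sqrt (sqrt x) > 0" using x0 by simp
  have "ln x = 4 * ln (sqrt (sqrt x))" using x0 by (simp add: ln_sqrt)
  also have "\<dots> \<le> 4 * sqrt (sqrt x)" using ln_le_minus_one[OF q] by simp
  finally have l: "ln x \<le> 4 * sqrt (sqrt x)" .
  have l0: "ln x \<ge> 0" using x by simp
  have "(ln x)\<^sup>2 \<le> (4 * sqrt (sqrt x))\<^sup>2" using l l0 by (intro power_mono) auto
  also have "\<dots> = 16 * sqrt x" using x0 by (simp add: power_mult_distrib)
  finally show ?thesis .
qed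

lemma asym:
  fixes c \<kappa> \<eta> :: real assumes c: "c > 0" and \<kappa>: "\<kappa> > 0" and \<eta>: "\<eta> > 0"
  shows "\<exists>d0::nat. d0 \<ge> 3 \<and> (\<forall>d\<ge>d0. \<forall>n::nat. c * (real d)\<^sup>2 / ln (real d) \<le> real n \<longrightarrow>
     exp (- (real n * real d)) + (4 * real d / \<eta> + 3) ^ d * exp (- real n * \<kappa>) \<le> exp (- (1 / 2) * real d))"
proof -
  define B where "B = max 3 (max (4 / \<eta> + 3) ((48 / (c * \<kappa>))\<^sup>2))"
  define d0 where "d0 = nat \<lceil>B\<rceil>"
  have "real d0 \<ge> B" unfolding d0_def by (rule real_nat_ceiling_ge)
  then have "real d0 \<ge> 3" unfolding B_def by simp
  then have d03: "d0 \<ge> 3" by simp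
  show ?thesis
  proof (intro exI conjI allI impI)
    show "d0 \<ge> 3" by (rule d03)
  next
    fix d n :: nat assume dd: "d0 \<le> d" and nh: "c * (real d)\<^sup>2 / ln (real d) \<le> real n"
    define x where "x = real d"
    have xB: "x \<ge> B" unfolding x_def using dd \<open>real d0 \<ge> B\<close> by linarith
    have x3: "x \<ge> 3" and x\<eta>: "x \<ge> 4 / \<eta> + 3" and xc: "x \<ge> (48 / (c * \<kappa>))\<^sup>2"
      using xB unfolding B_def by auto
    have x0: "x > 0" using x3 by simp
    have lx1: "ln x \<ge> 1"
    proof -
      have "exp 1 \<le> x" using exp_le x3 by linarith
      then have "ln (exp 1) \<le> ln x" using x0 by (subst ln_le_cancel_iff) auto
      then show ?thesis by simp
    qed
    have lxp: "ln x > 0" using lx1 by simp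
    have sq: "sqrt x \<ge> 48 / (c * \<kappa>)"
    proof -
      have "sqrt ((48 / (c * \<kappa>))\<^sup>2) \<le> sqrt x" using xc by (rule real_sqrt_le_mono)
      then show ?thesis using c \<kappa> by simp
    qed
    have ck: "c * \<kappa> * x \<ge> 3 * (ln x)\<^sup>2"
    proof -
      have "c * \<kappa> * sqrt x \<ge> 48" using sq c \<kappa> by (simp add: field_simps)
      then have "c * \<kappa> * sqrt x * sqrt x \<ge> 48 * sqrt x" using x0 by (intro mult_right_mono) auto
      moreover have "sqrt x * sqrt x = x" using x0 by simp
      ultimately have "c * \<kappa> * x \<ge> 48 * sqrt x" by (simp add: mult.assoc)
      moreover have "3 * (ln x)\<^sup>2 \<le> 48 * sqrt x" using ln_sq_bound[of x] x3 by simp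
      ultimately show ?thesis by linarith
    qed
    have nk: "real n * \<kappa> \<ge> 3 * x * ln x"
    proof -
      have "c * x\<^sup>2 / ln x * \<kappa> \<le> real n * \<kappa>" using nh \<kappa> unfolding x_def by (intro mult_right_mono) auto
      moreover have "c * x\<^sup>2 / ln x * \<kappa> = x * (c * \<kappa> * x) / ln x" by (simp add: power2_eq_square)
      moreover have "x * (c * \<kappa> * x) / ln x \<ge> x * (3 * (ln x)\<^sup>2) / ln x"
        using ck x0 lxp by (intro divide_right_mono mult_left_mono) auto
      moreover have "x * (3 * (ln x)\<^sup>2) / ln x = 3 * x * ln x" using lxp by (simp add: power2_eq_square)
      ultimately show ?thesis by linarith
    qed
    have n1: "real n \<ge> 1"
    proof -
      have "c * x\<^sup>2 / ln x > 0" using c x0 lxp by simp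
      then have "real n > 0" using nh unfolding x_def by linarith
      then show ?thesis by simp
    qed
    have bpos: "4 * x / \<eta> + 3 > 0" using x0 \<eta> by (simp add: add_pos_pos)
    have lb: "ln (4 * x / \<eta> + 3) \<le> 2 * ln x"
    proof -
      have "x * (4 / \<eta> + 3) \<le> x * x" using x\<eta> x0 by (intro mult_left_mono) auto
      then have "4 * x / \<eta> + 3 \<le> x\<^sup>2" using x3 by (simp add: power2_eq_square algebra_simps)
      then have "ln (4 * x / \<eta> + 3) \<le> ln (x\<^sup>2)" using bpos by (subst ln_le_cancel_iff) auto
      also have "ln (x\<^sup>2) = 2 * ln x" by (simp add: ln_realpow)
      finally show ?thesis .
    qed
    have t2: "(4 * x / \<eta> + 3) ^ d * exp (- real n * \<kappa>) \<le> exp (- x)"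
    proof -
      have "(4 * x / \<eta> + 3) ^ d = exp (ln ((4 * x / \<eta> + 3) ^ d))" using bpos by simp
      also have "\<dots> = exp (x * ln (4 * x / \<eta> + 3))" using bpos unfolding x_def by (simp add: ln_realpow)
      finally have "(4 * x / \<eta> + 3) ^ d * exp (- real n * \<kappa>) = exp (x * ln (4 * x / \<eta> + 3) - real n * \<kappa>)"
        by (simp add: exp_diff exp_minus field_simps)
      also have "\<dots> \<le> exp (- x)"
      proof -
        have "x * ln (4 * x / \<eta> + 3) \<le> x * (2 * ln x)" using lb x0 by (intro mult_left_mono) auto
        moreover have "x * ln x \<ge> x * 1" using lx1 x0 by (intro mult_left_mono) auto
        ultimately have "x * ln (4 * x / \<eta> + 3) - real n * \<kappa> \<le> - x" using nk by linarith
        then show ?thesis by simp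
      qed
      finally show ?thesis .
    qed
    have t1: "exp (- (real n * x)) \<le> exp (- x)"
      using n1 x0 by (simp add: mult_le_cancel_right1)
    have t3: "2 * exp (- x) \<le> exp (- (1 / 2) * x)"
    proof -
      have "2 \<le> exp (x / 2)" using exp_ge_add_one_self[of "x / 2"] x3 by linarith
      then have "2 * exp (- x) \<le> exp (x / 2) * exp (- x)" by (intro mult_right_mono) auto
      also have "\<dots> = exp (- (1 / 2) * x)" by (simp add: exp_add[symmetric])
      finally show ?thesis .
    qed
    show "exp (- (real n * real d)) + (4 * real d / \<eta> + 3) ^ d * exp (- real n * \<kappa>) \<le> exp (- (1 / 2) * real d)"
      using t1 t2 t3 unfolding x_def by linarith
  qed
qed

lemma partb_point:
  fixes X :: "nat \<Rightarrow> real" and n :: nat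
  assumes "n \<ge> 1"
  shows "((\<Sum>i<n. (X i)\<^sup>2))^3 \<le> (\<Sum>i<n. \<bar>X i\<bar>)\<^sup>2 * (\<Sum>i<n. (X i)^4)"
proof -
  define u1 where "u1 = (\<Sum>i<n. \<bar>X i\<bar>)"
  define u2 where "u2 = (\<Sum>i<n. (X i)\<^sup>2)"
  define u3 where "u3 = (\<Sum>i<n. \<bar>X i\<bar>^3)"
  define u4 where "u4 = (\<Sum>i<n. (X i)^4)"
  have h1: "u2\<^sup>2 \<le> u1 * u3"
  proof -
    have "(\<Sum>i<n. sqrt \<bar>X i\<bar> * (\<bar>X i\<bar> * sqrt \<bar>X i\<bar>))\<^sup>2 \<le> (\<Sum>i<n. (sqrt \<bar>X i\<bar>)\<^sup>2) * (\<Sum>i<n. (\<bar>X i\<bar> * sqrt \<bar>X i\<bar>)\<^sup>2)"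
      by (rule Cauchy_Schwarz_ineq_sum)
    moreover have "(\<Sum>i<n. sqrt \<bar>X i\<bar> * (\<bar>X i\<bar> * sqrt \<bar>X i\<bar>)) = u2"
    proof -
      have st: "sqrt \<bar>t\<bar> * (\<bar>t\<bar> * sqrt \<bar>t\<bar>) = t\<^sup>2" for t :: real
      proof -
        have "sqrt \<bar>t\<bar> * (\<bar>t\<bar> * sqrt \<bar>t\<bar>) = \<bar>t\<bar> * (sqrt \<bar>t\<bar>)\<^sup>2" by (simp add: power2_eq_square mult_ac)
        also have "\<dots> = t\<^sup>2" by (simp add: power2_eq_square)
        finally show ?thesis .
      qed
      show ?thesis unfolding u2_def by (intro sum.cong refl st)
    qed
    moreover have "(\<Sum>i<n. (sqrt \<bar>X i\<bar>)\<^sup>2) = u1" unfolding u1_def by simp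
    moreover have "(\<Sum>i<n. (\<bar>X i\<bar> * sqrt \<bar>X i\<bar>)\<^sup>2) = u3"
    proof -
      have st: "(\<bar>t\<bar> * sqrt \<bar>t\<bar>)\<^sup>2 = \<bar>t\<bar>^3" for t :: real
      proof -
        have "(\<bar>t\<bar> * sqrt \<bar>t\<bar>)\<^sup>2 = \<bar>t\<bar>\<^sup>2 * \<bar>t\<bar>" by (simp add: power_mult_distrib)
        also have "\<dots> = \<bar>t\<bar>^3" by (simp add: power3_eq_cube power2_eq_square)
        finally show ?thesis .
      qed
      show ?thesis unfolding u3_def by (intro sum.cong refl st)
    qed
    ultimately show ?thesis by simp
  qed
  have h2: "u3\<^sup>2 \<le> u2 * u4"
  proof -
    have "(\<Sum>i<n. X i * (\<bar>X i\<bar> * X i))\<^sup>2 \<le> (\<Sum>i<n. (X i)\<^sup>2) * (\<Sum>i<n. (\<bar>X i\<bar> * X i)\<^sup>2)"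
      by (rule Cauchy_Schwarz_ineq_sum)
    moreover have "(\<Sum>i<n. X i * (\<bar>X i\<bar> * X i)) = u3"
      unfolding u3_def by (intro sum.cong) (auto simp: power3_eq_cube abs_mult_self_eq mult_ac abs_mult[symmetric])
    moreover have "(\<Sum>i<n. (\<bar>X i\<bar> * X i)\<^sup>2) = u4"
      unfolding u4_def by (intro sum.cong) (auto simp: power_mult_distrib)
    ultimately show ?thesis by (simp add: u2_def)
  qed
  have p1: "u1 \<ge> 0" "u2 \<ge> 0" "u3 \<ge> 0" "u4 \<ge> 0"
    unfolding u1_def u2_def u3_def u4_def by (auto intro!: sum_nonneg)
  show ?thesis
  proof (cases "u2 = 0")
    case True then show ?thesis using p1 by (simp add: u2_def[symmetric] u1_def[symmetric] u4_def[symmetric])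
  next
    case False
    then have u2p: "u2 > 0" using p1 by simp
    have "u2^4 \<le> u1\<^sup>2 * u3\<^sup>2"
    proof -
      have "u2^4 = (u2\<^sup>2)\<^sup>2" by simp
      also have "\<dots> \<le> (u1*u3)\<^sup>2" using h1 p1 by (intro power_mono) auto
      finally show ?thesis by (simp add: power_mult_distrib)
    qed
    also have "\<dots> \<le> u1\<^sup>2 * (u2 * u4)" using h2 by (intro mult_left_mono) auto
    finally have "u2 * u2^3 \<le> u2 * (u1\<^sup>2 * u4)" by (simp add: power_numeral_reduce mult_ac)
    then have "u2^3 \<le> u1\<^sup>2 * u4" using u2p by simp
    then show ?thesis by (simp add: u1_def u2_def u4_def)
  qed
qed

lemma t1: fixes x :: "nat \<Rightarrow> real" shows "x i * (a * (\<Sum>k<n. v k i * v k j)) * x j = a * (\<Sum>k<n. (x i * v k i) * (x j * v k j))"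
  by (simp add: sum_distrib_left sum_distrib_right) (simp add: mult_ac)
lemma t2: fixes x :: "nat \<Rightarrow> real" shows "x i * (P - c * (if i = j then 1 else 0)) * x j = x i * P * x j - c * (if i = j then x i * x j else 0)"
  by (simp add: algebra_simps)
lemma quad_expand:
  fixes v :: "nat \<Rightarrow> nat \<Rightarrow> real" and x :: "nat \<Rightarrow> real"
  shows "(\<Sum>i<d. \<Sum>j<d. x i * ((1 / real n) * (\<Sum>k<n. v k i * v k j) - (c / real d) * (if i = j then 1 else 0)) * x j)
     = (1 / real n) * (\<Sum>k<n. (inner_d d x (v k))\<^sup>2) - (c / real d) * (\<Sum>i<d. (x i)\<^sup>2)"
proof -
  have "(\<Sum>i<d. \<Sum>j<d. x i * ((1 / real n) * (\<Sum>k<n. v k i * v k j) - (c / real d) * (if i = j then 1 else 0)) * x j)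
     = (\<Sum>i<d. \<Sum>j<d. (1 / real n) * (\<Sum>k<n. (x i * v k i) * (x j * v k j)) - (c / real d) * (if i = j then x i * x j else 0))"
    by (intro sum.cong refl) (simp only: t2 t1)
  also have "\<dots> = (1 / real n) * (\<Sum>i<d. \<Sum>j<d. \<Sum>k<n. (x i * v k i) * (x j * v k j)) - (c / real d) * (\<Sum>i<d. \<Sum>j<d. (if i = j then x i * x j else 0))"
    by (simp only: sum_subtractf sum_distrib_left)
  also have "(\<Sum>i<d. \<Sum>j<d. (if i = j then x i * x j else 0)) = (\<Sum>i<d. (x i)\<^sup>2)"
  proof (intro sum.cong refl)
    fix i assume "i \<in> {..<d}"
    then show "(\<Sum>j<d. (if i = j then x i * x j else 0)) = (x i)\<^sup>2"
      using sum.delta[of "{..<d}" i "\<lambda>j. x i * x j"] by (simp add: power2_eq_square)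
  qed
  also have "(\<Sum>i<d. \<Sum>j<d. \<Sum>k<n. (x i * v k i) * (x j * v k j)) = (\<Sum>k<n. \<Sum>i<d. \<Sum>j<d. (x i * v k i) * (x j * v k j))"
  proof -
    have "(\<Sum>i<d. \<Sum>j<d. \<Sum>k<n. (x i * v k i) * (x j * v k j)) = (\<Sum>i<d. \<Sum>k<n. \<Sum>j<d. (x i * v k i) * (x j * v k j))"
      by (rule sum.cong[OF refl], rule sum.swap)
    also have "\<dots> = (\<Sum>k<n. \<Sum>i<d. \<Sum>j<d. (x i * v k i) * (x j * v k j))"
      by (rule sum.swap)
    finally show ?thesis .
  qed
  also have "\<dots> = (\<Sum>k<n. (inner_d d x (v k))\<^sup>2)"
    unfolding inner_d_def power2_eq_square by (simp only: sum_product)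
  finally show ?thesis .
qed

lemma inner_bound:
  fixes x y :: "nat \<Rightarrow> real"
  assumes "x \<in> sphere_d d"
  shows "\<bar>inner_d d x y\<bar> \<le> norm_d d y"
proof -
  have "(inner_d d x y)\<^sup>2 \<le> (\<Sum>j<d. (x j)\<^sup>2) * (\<Sum>j<d. (y j)\<^sup>2)"
    unfolding inner_d_def by (rule Cauchy_Schwarz_ineq_sum)
  also have "\<dots> = (\<Sum>j<d. (y j)\<^sup>2)" using assms by (simp add: sphere_d_def)
  finally have "sqrt ((inner_d d x y)\<^sup>2) \<le> sqrt (\<Sum>j<d. (y j)\<^sup>2)" by (rule real_sqrt_le_mono)
  then show ?thesis by (simp add: norm_d_def)
qed

lemma sphere_ne: assumes "d \<ge> 1" shows "(\<lambda>j. if j = 0 then 1 else 0) \<in> sphere_d d"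
proof -
  have "(\<Sum>j<d. (if j = 0 then 1 else 0 :: real)\<^sup>2) = (\<Sum>j<d. if j = 0 then 1 else 0)"
    by (intro sum.cong) auto
  also have "\<dots> = 1" using assms by (simp add: sum.delta')
  finally show ?thesis unfolding sphere_d_def by simp
qed

lemma partb:
  fixes v :: "nat \<Rightarrow> nat \<Rightarrow> real" and d n :: nat
  assumes d1: "d \<ge> 1" and n1: "n \<ge> 1" and cp: "c' > 0" and Ap: "A > 0"
   and nb: "\<forall>i<n. (\<exists>j<d. v i j \<noteq> 0) \<and> norm_d d (v i) \<le> B"
   and lw: "loewner_ge d (\<lambda>j k. (1 / real n) * (\<Sum>i<n. v i j * v i k))
                    (\<lambda>j k. (c' / real d) * (if j = k then 1 else 0))"
   and sp: "(SUP x\<in>sphere_d d. (1 / real n) * (\<Sum>i<n. (inner_d d (v i) x) ^ 4)) \<le> A / (real d)\<^sup>2"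
  shows "(INF x\<in>sphere_d d. avg_abs_proj n d v x) \<ge> sqrt (c'^3 / A) / sqrt (real d)"
proof (rule cINF_greatest)
  show "sphere_d d \<noteq> {}" using sphere_ne[OF d1] by blast
next
  fix x assume xs: "x \<in> sphere_d d"
  have inner_comm: "inner_d d a b = inner_d d b a" for a b unfolding inner_d_def by (simp add: mult_ac)
  define X where "X i = inner_d d x (v i)" for i
  have dpos: "real d > 0" and npos: "real n > 0" using d1 n1 by auto
  have Q2: "(1 / real n) * (\<Sum>i<n. (X i)\<^sup>2) \<ge> c' / real d"
  proof -
    have "0 \<le> (\<Sum>i<d. \<Sum>j<d. x i * ((1 / real n) * (\<Sum>k<n. v k i * v k j) - (c' / real d) * (if i = j then 1 else 0)) * x j)"
      using lw unfolding loewner_ge_def by blast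
    also have "\<dots> = (1 / real n) * (\<Sum>i<n. (X i)\<^sup>2) - c' / real d"
      unfolding quad_expand using xs by (simp add: X_def sphere_d_def)
    finally show ?thesis by simp
  qed
  have bd: "\<bar>inner_d d (v i) y\<bar> \<le> B" if "i < n" "y \<in> sphere_d d" for i y
  proof -
    have "\<bar>inner_d d y (v i)\<bar> \<le> norm_d d (v i)" by (rule inner_bound[OF that(2)])
    moreover have "norm_d d (v i) \<le> B" using nb that(1) by blast
    ultimately show ?thesis by (simp add: inner_comm)
  qed
  have bdd: "bdd_above ((\<lambda>x. (1 / real n) * (\<Sum>i<n. (inner_d d (v i) x) ^ 4)) ` sphere_d d)"
  proof (rule bdd_aboveI2)
    fix y assume y: "y \<in> sphere_d d"
    have "(\<Sum>i<n. (inner_d d (v i) y) ^ 4) \<le> (\<Sum>i<n. B ^ 4)"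
    proof (rule sum_mono)
      fix i assume "i \<in> {..<n}"
      then have "\<bar>inner_d d (v i) y\<bar> ^ 4 \<le> B ^ 4" using bd[of i y] y by (intro power_mono) auto
      then show "(inner_d d (v i) y) ^ 4 \<le> B ^ 4" by (simp add: power_abs)
    qed
    then show "(1 / real n) * (\<Sum>i<n. (inner_d d (v i) y) ^ 4) \<le> B ^ 4"
      using npos by (simp add: field_simps)
  qed
  have Q4: "(1 / real n) * (\<Sum>i<n. (X i)^4) \<le> A / (real d)\<^sup>2"
  proof -
    have "(1 / real n) * (\<Sum>i<n. (X i)^4) = (1 / real n) * (\<Sum>i<n. (inner_d d (v i) x) ^ 4)"
      by (simp add: X_def inner_comm)
    also have "\<dots> \<le> (SUP x\<in>sphere_d d. (1 / real n) * (\<Sum>i<n. (inner_d d (v i) x) ^ 4))"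
      by (rule cSUP_upper[OF xs bdd])
    finally show ?thesis using sp by linarith
  qed
  define q1 where "q1 = (1 / real n) * (\<Sum>i<n. \<bar>X i\<bar>)"
  define q2 where "q2 = (1 / real n) * (\<Sum>i<n. (X i)\<^sup>2)"
  define q4 where "q4 = (1 / real n) * (\<Sum>i<n. (X i)^4)"
  have q1nn: "q1 \<ge> 0" unfolding q1_def by (auto intro!: sum_nonneg)
  have key: "q2^3 \<le> q1\<^sup>2 * q4"
  proof -
    have "(\<Sum>i<n. (X i)\<^sup>2)^3 \<le> (\<Sum>i<n. \<bar>X i\<bar>)\<^sup>2 * (\<Sum>i<n. (X i)^4)"
      by (rule partb_point[OF n1])
    then have "(1 / real n)^3 * (\<Sum>i<n. (X i)\<^sup>2)^3 \<le> (1 / real n)^3 * ((\<Sum>i<n. \<bar>X i\<bar>)\<^sup>2 * (\<Sum>i<n. (X i)^4))"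
      using npos by (intro mult_left_mono) auto
    moreover have "q2^3 = (1 / real n)^3 * (\<Sum>i<n. (X i)\<^sup>2)^3" unfolding q2_def by (simp only: power_mult_distrib)
    moreover have "q1\<^sup>2 * q4 = (1 / real n)^3 * ((\<Sum>i<n. \<bar>X i\<bar>)\<^sup>2 * (\<Sum>i<n. (X i)^4))"
      unfolding q1_def q4_def by (simp add: power_mult_distrib power2_eq_square power3_eq_cube mult_ac)
    ultimately show ?thesis by simp
  qed
  have "(c' / real d)^3 \<le> q2^3" using Q2 cp dpos unfolding q2_def by (intro power_mono) auto
  also have "\<dots> \<le> q1\<^sup>2 * q4" by (rule key)
  also have "\<dots> \<le> q1\<^sup>2 * (A / (real d)\<^sup>2)" using Q4 unfolding q4_def by (intro mult_left_mono) auto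
  finally have "(c' / real d)^3 \<le> q1\<^sup>2 * (A / (real d)\<^sup>2)" .
  then have "c'^3 / (A * real d) \<le> q1\<^sup>2"
    using dpos Ap by (simp add: field_simps power2_eq_square power3_eq_cube)
  then have "sqrt (c'^3 / (A * real d)) \<le> sqrt (q1\<^sup>2)" by (rule real_sqrt_le_mono)
  then have "sqrt (c'^3 / (A * real d)) \<le> q1" using q1nn by simp
  moreover have "sqrt (c'^3 / (A * real d)) = sqrt (c'^3 / A) / sqrt (real d)"
    by (simp add: real_sqrt_divide real_sqrt_mult)
  moreover have "q1 = avg_abs_proj n d v x" unfolding q1_def avg_abs_proj_def X_def ..
  ultimately show "sqrt (c'^3 / A) / sqrt (real d) \<le> avg_abs_proj n d v x" by simp
qed

lemma INF_iff_Fw: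
  assumes d: "d \<ge> 1"
  shows "(t \<le> (INF x\<in>sphere_d d. avg_abs_proj n d (\<lambda>i j. \<omega> (i, j)) x)) \<longleftrightarrow> (\<forall>x\<in>sphere_d d. t \<le> Fw n d \<omega> x)"
proof -
  have ne: "sphere_d d \<noteq> {}" using sphere_ne[OF d] by blast
  have bdd: "bdd_below ((\<lambda>x. avg_abs_proj n d (\<lambda>i j. \<omega> (i, j)) x) ` sphere_d d)"
    by (rule bdd_belowI2[of _ 0]) (simp add: Fw_avg Fw_nonneg)
  show ?thesis using le_cINF_iff[OF ne bdd, of t] by (simp add: Fw_avg)
qed

lemma card_grid_bound:
  assumes d: "d \<ge> 1" and \<eta>: "\<eta> > 0"
  shows "real (card (grid (\<eta> / (2 * real d)) (nat \<lceil>1 / (\<eta> / (2 * real d))\<rceil>) d)) \<le> (4 * real d / \<eta> + 3) ^ d"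
proof -
  define K where "K = nat \<lceil>1 / (\<eta> / (2 * real d))\<rceil>"
  have e: "1 / (\<eta> / (2 * real d)) = 2 * real d / \<eta>" by simp
  have "real K \<le> 2 * real d / \<eta> + 1"
  proof -
    have "real_of_int \<lceil>2 * real d / \<eta>\<rceil> < 2 * real d / \<eta> + 1" using ceiling_correct[of "2 * real d / \<eta>"] by linarith
    moreover have "\<lceil>2 * real d / \<eta>\<rceil> \<ge> 0"
    proof -
      have nn: "0 \<le> 2 * real d / \<eta>" using \<eta> by simp
      then show ?thesis by simp
    qed
    ultimately show ?thesis unfolding K_def e by simp
  qed
  then have "real (2 * K + 1) \<le> 4 * real d / \<eta> + 3" by simp
  then have "real (2 * K + 1) ^ d \<le> (4 * real d / \<eta> + 3) ^ d" by (intro power_mono) auto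
  moreover have "real (card (grid (\<eta> / (2 * real d)) K d)) \<le> real (2 * K + 1) ^ d"
  proof -
    have "real (card (grid (\<eta> / (2 * real d)) K d)) \<le> real ((2 * K + 1) ^ d)"
      by (rule of_nat_mono[OF grid_card])
    also have "real ((2 * K + 1) ^ d) = real (2 * K + 1) ^ d" by (rule of_nat_power)
    finally show ?thesis .
  qed
  ultimately show ?thesis unfolding K_def by linarith
qed

theorem lemma2p5:
  shows
   "(\<forall>c>0. \<forall>\<epsilon>>0. \<exists>K>0. \<exists>d0::nat. \<forall>d\<ge>d0. \<forall>n::nat.
       real n \<ge> c * (real d)\<^sup>2 / ln (real d) \<longrightarrow>
       measure (gauss_vectors n d)
         {\<omega> \<in> space (gauss_vectors n d).
            (INF x\<in>sphere_d d. avg_abs_proj n d (\<lambda>i j. \<omega> (i, j)) x)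
              \<ge> sqrt ((2 - \<epsilon>) / (pi * real d))}
       \<ge> 1 - exp (- K * real d))
    \<and>
    (\<forall>B>0. \<forall>c'>0. \<forall>A>0. \<exists>C>0. \<forall>d n::nat. \<forall>v::nat \<Rightarrow> nat \<Rightarrow> real.
       d \<ge> 1 \<longrightarrow> n \<ge> 1 \<longrightarrow>
       (\<forall>i<n. (\<exists>j<d. v i j \<noteq> 0) \<and> norm_d d (v i) \<le> B) \<longrightarrow>
       loewner_ge d (\<lambda>j k. (1 / real n) * (\<Sum>i<n. v i j * v i k))
                    (\<lambda>j k. (c' / real d) * (if j = k then 1 else 0)) \<longrightarrow>
       (SUP x\<in>sphere_d d. (1 / real n) * (\<Sum>i<n. (inner_d d (v i) x) ^ 4)) \<le> A / (real d)\<^sup>2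
       \<longrightarrow>
       (INF x\<in>sphere_d d. avg_abs_proj n d v x) \<ge> C / sqrt (real d))"
proof (intro conjI)
  show "\<forall>B>0. \<forall>c'>0. \<forall>A>0. \<exists>C>0. \<forall>d n::nat. \<forall>v::nat \<Rightarrow> nat \<Rightarrow> real.
       d \<ge> 1 \<longrightarrow> n \<ge> 1 \<longrightarrow>
       (\<forall>i<n. (\<exists>j<d. v i j \<noteq> 0) \<and> norm_d d (v i) \<le> B) \<longrightarrow>
       loewner_ge d (\<lambda>j k. (1 / real n) * (\<Sum>i<n. v i j * v i k))
                    (\<lambda>j k. (c' / real d) * (if j = k then 1 else 0)) \<longrightarrow>
       (SUP x\<in>sphere_d d. (1 / real n) * (\<Sum>i<n. (inner_d d (v i) x) ^ 4)) \<le> A / (real d)\<^sup>2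
       \<longrightarrow>
       (INF x\<in>sphere_d d. avg_abs_proj n d v x) \<ge> C / sqrt (real d)"
  proof (intro allI impI)
    fix B c' A :: real assume B: "B > 0" and c': "c' > 0" and A: "A > 0"
    show "\<exists>C>0. \<forall>d n::nat. \<forall>v::nat \<Rightarrow> nat \<Rightarrow> real.
       d \<ge> 1 \<longrightarrow> n \<ge> 1 \<longrightarrow>
       (\<forall>i<n. (\<exists>j<d. v i j \<noteq> 0) \<and> norm_d d (v i) \<le> B) \<longrightarrow>
       loewner_ge d (\<lambda>j k. (1 / real n) * (\<Sum>i<n. v i j * v i k))
                    (\<lambda>j k. (c' / real d) * (if j = k then 1 else 0)) \<longrightarrow>
       (SUP x\<in>sphere_d d. (1 / real n) * (\<Sum>i<n. (inner_d d (v i) x) ^ 4)) \<le> A / (real d)\<^sup>2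
       \<longrightarrow>
       (INF x\<in>sphere_d d. avg_abs_proj n d v x) \<ge> C / sqrt (real d)"
    proof (intro exI[of _ "sqrt (c'^3 / A)"] conjI allI impI)
      show "sqrt (c'^3 / A) > 0" using c' A by simp
      fix d n :: nat and v :: "nat \<Rightarrow> nat \<Rightarrow> real"
      assume "d \<ge> 1" "n \<ge> 1" "\<forall>i<n. (\<exists>j<d. v i j \<noteq> 0) \<and> norm_d d (v i) \<le> B"
        "loewner_ge d (\<lambda>j k. (1 / real n) * (\<Sum>i<n. v i j * v i k))
                    (\<lambda>j k. (c' / real d) * (if j = k then 1 else 0))"
        "(SUP x\<in>sphere_d d. (1 / real n) * (\<Sum>i<n. (inner_d d (v i) x) ^ 4)) \<le> A / (real d)\<^sup>2"
      then show "(INF x\<in>sphere_d d. avg_abs_proj n d v x) \<ge> sqrt (c'^3 / A) / sqrt (real d)"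
        using partb[OF _ _ c' A] by blast
    qed
  qed
next
  show "\<forall>c>0. \<forall>\<epsilon>>0. \<exists>K>0. \<exists>d0::nat. \<forall>d\<ge>d0. \<forall>n::nat.
       real n \<ge> c * (real d)\<^sup>2 / ln (real d) \<longrightarrow>
       measure (gauss_vectors n d)
         {\<omega> \<in> space (gauss_vectors n d).
            (INF x\<in>sphere_d d. avg_abs_proj n d (\<lambda>i j. \<omega> (i, j)) x)
              \<ge> sqrt ((2 - \<epsilon>) / (pi * real d))}
       \<ge> 1 - exp (- K * real d)"
  proof (intro allI impI)
    fix c \<epsilon> :: real assume c: "c > 0" and \<epsilon>: "\<epsilon> > 0"
    show "\<exists>K>0. \<exists>d0::nat. \<forall>d\<ge>d0. \<forall>n::nat.
       real n \<ge> c * (real d)\<^sup>2 / ln (real d) \<longrightarrow>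
       measure (gauss_vectors n d)
         {\<omega> \<in> space (gauss_vectors n d).
            (INF x\<in>sphere_d d. avg_abs_proj n d (\<lambda>i j. \<omega> (i, j)) x)
              \<ge> sqrt ((2 - \<epsilon>) / (pi * real d))}
       \<ge> 1 - exp (- K * real d)"
    proof (cases "\<epsilon> \<ge> 2")
      case True
      show ?thesis
      proof (intro exI[of _ 1] exI[of _ "1::nat"] conjI allI impI)
        fix d n :: nat assume d: "1 \<le> d"
        interpret prob_space "gauss_vectors n d" by (rule gv_prob_space[OF d])
        have "{\<omega> \<in> space (gauss_vectors n d).
            (INF x\<in>sphere_d d. avg_abs_proj n d (\<lambda>i j. \<omega> (i, j)) x) \<ge> sqrt ((2 - \<epsilon>) / (pi * real d))}
            = space (gauss_vectors n d)"
        proof -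
          have "sqrt ((2 - \<epsilon>) / (pi * real d)) \<le> 0" using True d by (simp add: divide_nonpos_pos)
          then have "\<forall>\<omega>. \<forall>x\<in>sphere_d d. sqrt ((2 - \<epsilon>) / (pi * real d)) \<le> Fw n d \<omega> x"
            using Fw_nonneg by (meson order_trans)
          then show ?thesis using INF_iff_Fw[OF d] by auto
        qed
        then show "measure (gauss_vectors n d)
         {\<omega> \<in> space (gauss_vectors n d).
            (INF x\<in>sphere_d d. avg_abs_proj n d (\<lambda>i j. \<omega> (i, j)) x)
              \<ge> sqrt ((2 - \<epsilon>) / (pi * real d))}
         \<ge> 1 - exp (- 1 * real d)" using prob_space.prob_space[OF gv_prob_space[OF d]] by simp
      qed simp
    next
      case False
      define a0 where "a0 = sqrt ((2 - \<epsilon>) / pi)"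
      define m where "m = sqrt (2 / pi)"
      define \<eta> where "\<eta> = (m - a0) / 2"
      have a0p: "a0 > 0" unfolding a0_def using False by simp
      have a0m: "a0 < m" unfolding a0_def m_def using \<epsilon> by (intro real_sqrt_less_mono divide_strict_right_mono) auto
      have \<eta>: "\<eta> > 0" unfolding \<eta>_def using a0m by simp
      have \<kappa>: "\<eta>\<^sup>2 / 2 > 0" using \<eta> by simp
      obtain d0 where d03: "d0 \<ge> 3" and H: "\<forall>d\<ge>d0. \<forall>n::nat. c * (real d)\<^sup>2 / ln (real d) \<le> real n \<longrightarrow>
          exp (- (real n * real d)) + (4 * real d / \<eta> + 3) ^ d * exp (- real n * (\<eta>\<^sup>2 / 2)) \<le> exp (- (1 / 2) * real d)"
        using asym[OF c \<kappa> \<eta>] by blast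
      show ?thesis
      proof (intro exI[of _ "1/2"] exI[of _ d0] conjI allI impI)
        fix d n :: nat assume dd: "d0 \<le> d" and nh: "c * (real d)\<^sup>2 / ln (real d) \<le> real n"
        have d: "d \<ge> 1" using dd d03 by simp
        have n: "n \<ge> 1"
        proof -
          have "ln (real d) > 0" using dd d03 by simp
          then have "c * (real d)\<^sup>2 / ln (real d) > 0" using c d by simp
          then show ?thesis using nh by simp
        qed
        have thr: "sqrt ((2 - \<epsilon>) / (pi * real d)) = a0 * (1 / sqrt (real d))"
          unfolding a0_def by (simp add: real_sqrt_divide real_sqrt_mult)
        have seteq: "{\<omega> \<in> space (gauss_vectors n d).
            (INF x\<in>sphere_d d. avg_abs_proj n d (\<lambda>i j. \<omega> (i, j)) x) \<ge> sqrt ((2 - \<epsilon>) / (pi * real d))}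
          = {\<omega> \<in> space (gauss_vectors n d). \<forall>x\<in>sphere_d d. a0 * (1 / sqrt (real d)) \<le> Fw n d \<omega> x}"
          unfolding thr using INF_iff_Fw[OF d] by auto
        have M: "measure (gauss_vectors n d) {\<omega> \<in> space (gauss_vectors n d). \<forall>x\<in>sphere_d d. a0 * (1 / sqrt (real d)) \<le> Fw n d \<omega> x}
          \<ge> 1 - exp (- (real n * real d)) - real (card (grid (\<eta> / (2 * real d)) (nat \<lceil>1 / (\<eta> / (2 * real d))\<rceil>) d)) * exp (- real n * \<eta>\<^sup>2 / 2)"
          using main_a[OF d n a0p a0m[unfolded m_def]] unfolding \<eta>_def m_def by simp
        have eqe: "- real n * \<eta>\<^sup>2 / 2 = - real n * (\<eta>\<^sup>2 / 2)" by simp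
        have C: "real (card (grid (\<eta> / (2 * real d)) (nat \<lceil>1 / (\<eta> / (2 * real d))\<rceil>) d)) * exp (- real n * \<eta>\<^sup>2 / 2)
           \<le> (4 * real d / \<eta> + 3) ^ d * exp (- real n * (\<eta>\<^sup>2 / 2))"
          unfolding eqe using card_grid_bound[OF d \<eta>] by (intro mult_right_mono) auto
        have "exp (- (real n * real d)) + (4 * real d / \<eta> + 3) ^ d * exp (- real n * (\<eta>\<^sup>2 / 2)) \<le> exp (- (1 / 2) * real d)"
          using H dd nh by blast
        then show "measure (gauss_vectors n d)
         {\<omega> \<in> space (gauss_vectors n d).
            (INF x\<in>sphere_d d. avg_abs_proj n d (\<lambda>i j. \<omega> (i, j)) x)
              \<ge> sqrt ((2 - \<epsilon>) / (pi * real d))}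
         \<ge> 1 - exp (- (1 / 2) * real d)"
          unfolding seteq using M C by linarith
      qed simp
    qed
  qed
qed

end
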